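(* Let $W$ be a topologically free $\mathbb{C}[[\hbar]]$-module and let $U$ be an $\hbar$-adically quasi-compatible, $Y^\phi_{\mathcal E}$-closed $\mathbb{C}[[\hbar]]$-submodule of $\mathcal{E}_\hbar(W)$. Then both $[U]$ and $\overline U$ are $\hbar$-adically quasi-compatible and $Y^\phi_{\mathcal E}$-closed.
   Context: A $\mathbb{C}[[\hbar]]$-module is topologically free if isomorphic to $W_0[[\hbar]]$ for a vector space $W_0$. For a submodule $U$ of a topologically free $V$, $\overline U$ is its $\hbar$-adic closure and $[U]=\{v\in V:\hbar^nv\in U\text{ for some }n\ge0\}$. $\mathcal{E}^{(r)}_\hbar(W)$ is the set of $f\in(\mathrm{End}_{\mathbb{C}[[\hbar]]}W)[[x_1^{\pm1},\dots,x_r^{\pm1}]]$ whose reduction $\pi_n(f)$ mod $\hbar^n$ lies in $\mathrm{Hom}(W/\hbar^nW,(W/\hbar^nW)((x_1,\dots,x_r)))$ for all $n\ge1$; $\mathcal{E}_\hbar(W)=\mathcal{E}^{(1)}_\hbar(W)$. Fix $\phi(x,z)=e^{zp(x)\partial_x}x$, $0\ne p(x)\in\mathbb{C}((x))$. A sequence $(a_1,\dots,a_r)$ in $\mathrm{Hom}(M,M((x)))$ ($M$ a vector space) is quasi-compatible if some nonzero $f(x,y)\in\mathbb{C}((x,y))$ satisfies $\prod_{i<j}f(x_i,x_j)a_1(x_1)\cdots a_r(x_r)\in\mathrm{Hom}(M,M((x_1,\dots,x_r)))$; a subset of $\mathcal{E}_\hbar(W)$ is $\hbar$-adically quasi-compatible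 if the reductions mod $\hbar^n$ of each of its finite sequences are quasi-compatible for all $n$. For a quasi-compatible pair $(\alpha,\beta)$ over $M$, $Y^\phi_{\mathcal E}(\alpha(x),z)\beta(x)=\sum_m\alpha^\phi_m\beta\,z^{-m-1}:=\iota_{x,z}(1/f(\phi(x,z),x))(f(x_1,x)\alpha(x_1)\beta(x))|_{x_1=\phi(x,z)}$ for nonzero $f\in\mathbb{C}((x_1,x_2))$ with $f(x_1,x_2)\alpha(x_1)\beta(x_2)\in\mathrm{Hom}(M,M((x_1,x_2)))$; in $\mathcal{E}_\hbar(W)$, $\alpha^\phi_m\beta$ is the unique element with $\pi_n(\alpha^\phi_m\beta)=\pi_n(\alpha)^\phi_m\pi_n(\beta)$ for all $n$. A submodule is $Y^\phi_{\mathcal E}$-closed if it contains $\alpha^\phi_m\beta$ for all its elements $\alpha,\beta$ and $m\in\mathbb Z$. Closures and $[\cdot]$ are taken in $\mathcal{E}_\hbar(W)$. *)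

theory Defs
  imports Complex_Main "HOL-Computational_Algebra.Formal_Laurent_Series"
begin

text \<open>W0 is a complex vector space: a type 'v with scalar multiplication sc,
  assumed to satisfy vector_space sc.  The topologically free module W is
  W0[[h]], represented as nat => 'v (w = sum_i h^i w_i).  Scalars of C[[h]]
  are nat => complex.\<close>

type_synonym 'v hmod = "nat \<Rightarrow> 'v"
type_synonym 'v hop = "'v hmod \<Rightarrow> 'v hmod"
text \<open>Elements of (End W)[[x^{+-1}]]: coefficient of x^m is (a m).\<close>
type_synonym 'v hser = "int \<Rightarrow> 'v hop"

definition hsmult :: "(complex \<Rightarrow> 'v::ab_group_add \<Rightarrow> 'v) \<Rightarrow> (nat \<Rightarrow> complex) \<Rightarrow> 'v hmod \<Rightarrow> 'v hmod" where
  "hsmult sc c w = (\<lambda>n. \<Sum>i\<le>n. sc (c i) (w (n - i)))"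

definition hadd :: "'v::ab_group_add hmod \<Rightarrow> 'v hmod \<Rightarrow> 'v hmod" where
  "hadd v w = (\<lambda>n. v n + w n)"

definition hlinear :: "(complex \<Rightarrow> 'v::ab_group_add \<Rightarrow> 'v) \<Rightarrow> 'v hop \<Rightarrow> bool" where
  "hlinear sc A \<longleftrightarrow> (\<forall>v w. A (hadd v w) = hadd (A v) (A w)) \<and>
                    (\<forall>c w. A (hsmult sc c w) = hsmult sc c (A w))"

text \<open>E_h(W): reduction mod h^n (components i < n) lies in Hom(M, M((x))).\<close>
definition Eh :: "(complex \<Rightarrow> 'v::ab_group_add \<Rightarrow> 'v) \<Rightarrow> 'v hser set" where
  "Eh sc = {a. (\<forall>m. hlinear sc (a m)) \<and>
     (\<forall>n\<ge>1. \<forall>w. \<exists>N. \<forall>m<N. \<forall>i<n. a m w i = 0)}"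

definition sadd :: "'v::ab_group_add hser \<Rightarrow> 'v hser \<Rightarrow> 'v hser" where
  "sadd a b = (\<lambda>m w. hadd (a m w) (b m w))"

definition ssmult :: "(complex \<Rightarrow> 'v::ab_group_add \<Rightarrow> 'v) \<Rightarrow> (nat \<Rightarrow> complex) \<Rightarrow> 'v hser \<Rightarrow> 'v hser" where
  "ssmult sc c a = (\<lambda>m w. hsmult sc c (a m w))"

definition szero :: "'v::ab_group_add hser" where
  "szero = (\<lambda>m w i. 0)"

definition hpow :: "nat \<Rightarrow> nat \<Rightarrow> complex" where
  "hpow n = (\<lambda>i. if i = n then 1 else 0)"

definition hsubmodule :: "(complex \<Rightarrow> 'v::ab_group_add \<Rightarrow> 'v) \<Rightarrow> 'v hser set \<Rightarrow> bool" where
  "hsubmodule sc U \<longleftrightarrow> U \<subseteq> Eh sc \<and> szero \<in> U \<and>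
     (\<forall>a\<in>U. \<forall>b\<in>U. sadd a b \<in> U) \<and> (\<forall>c. \<forall>a\<in>U. ssmult sc c a \<in> U)"

text \<open>[U] = {v in E_h(W). h^n v in U for some n}.\<close>
definition hsat :: "(complex \<Rightarrow> 'v::ab_group_add \<Rightarrow> 'v) \<Rightarrow> 'v hser set \<Rightarrow> 'v hser set" where
  "hsat sc U = {v \<in> Eh sc. \<exists>n. ssmult sc (hpow n) v \<in> U}"

text \<open>h-adic closure of U in E_h(W): v is in the closure iff every
  neighbourhood v + h^n E_h(W) meets U.\<close>
definition hclosure :: "(complex \<Rightarrow> 'v::ab_group_add \<Rightarrow> 'v) \<Rightarrow> 'v hser set \<Rightarrow> 'v hser set" where
  "hclosure sc U = {v \<in> Eh sc. \<forall>n. \<exists>u\<in>U. \<exists>e\<in>Eh sc. v = sadd u (ssmult sc (hpow n) e)}"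

text \<open>C((x,y)): coefficient functions with exponents bounded below.\<close>
definition laurent2 :: "(int \<Rightarrow> int \<Rightarrow> complex) \<Rightarrow> bool" where
  "laurent2 F \<longleftrightarrow> (\<exists>N. \<forall>a b. (a < N \<or> b < N) \<longrightarrow> F a b = 0)"

text \<open>r-variable series as functions on multi-indices (int lists of length r).\<close>
definition pairser :: "nat \<Rightarrow> nat \<Rightarrow> nat \<Rightarrow> (int \<Rightarrow> int \<Rightarrow> complex) \<Rightarrow> int list \<Rightarrow> complex" where
  "pairser r i j F = (\<lambda>ks. if length ks = r \<and> (\<forall>l<r. l \<noteq> i \<and> l \<noteq> j \<longrightarrow> ks ! l = 0)
                           then F (ks ! i) (ks ! j) else 0)"

definition conv :: "nat \<Rightarrow> (int list \<Rightarrow> complex) \<Rightarrow> (int list \<Rightarrow> complex) \<Rightarrow> int list \<Rightarrow> complex" where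
  "conv r P Q = (\<lambda>ns. \<Sum>ks\<in>{ks. length ks = r \<and> P ks \<noteq> 0 \<and> Q (map2 (-) ns ks) \<noteq> 0}.
                        P ks * Q (map2 (-) ns ks))"

definition unitser :: "nat \<Rightarrow> int list \<Rightarrow> complex" where
  "unitser r = (\<lambda>ks. if ks = replicate r 0 then 1 else 0)"

text \<open>prod_{i<j} f(x_i,x_j) as an r-variable series.\<close>
definition pairprod :: "nat \<Rightarrow> (int \<Rightarrow> int \<Rightarrow> complex) \<Rightarrow> int list \<Rightarrow> complex" where
  "pairprod r F = foldr (\<lambda>(i,j) acc. conv r (pairser r i j F) acc)
                        [(i,j). i \<leftarrow> [0..<r], j \<leftarrow> [Suc i..<r]] (unitser r)"

text \<open>a_1(x_1)...a_r(x_r): coefficient at (m_1,...,m_r) applied to w.\<close>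
definition opprod :: "'v hser list \<Rightarrow> int list \<Rightarrow> 'v hop" where
  "opprod as ms w = foldr (\<lambda>(a,m) acc. a m acc) (zip as ms) w"

text \<open>Quasi-compatibility of the reductions mod h^n (components i < n)
  of a sequence in E_h(W).\<close>
definition qc_at :: "(complex \<Rightarrow> 'v::ab_group_add \<Rightarrow> 'v) \<Rightarrow> nat \<Rightarrow> 'v hser list \<Rightarrow> bool" where
  "qc_at sc n as \<longleftrightarrow> (let r = length as in
     \<exists>F. laurent2 F \<and> F \<noteq> (\<lambda>a b. 0) \<and>
       (\<forall>w. \<exists>N. \<forall>ns. length ns = r \<longrightarrow> (\<exists>l<r. ns ! l < N) \<longrightarrow>
          (\<forall>i<n. (\<Sum>ks\<in>{ks. length ks = r \<and> pairprod r F ks \<noteq> 0 \<and>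
                              opprod as (map2 (-) ns ks) w i \<noteq> 0}.
                     sc (pairprod r F ks) (opprod as (map2 (-) ns ks) w i)) = 0)))"

definition hqc :: "(complex \<Rightarrow> 'v::ab_group_add \<Rightarrow> 'v) \<Rightarrow> 'v hser set \<Rightarrow> bool" where
  "hqc sc S \<longleftrightarrow> (\<forall>as. set as \<subseteq> S \<longrightarrow> (\<forall>n\<ge>1. qc_at sc n as))"

text \<open>phi(x,z) = exp(z p(x) d/dx) x in C((x))[[z]].\<close>
definition phiD :: "complex fls \<Rightarrow> complex fls \<Rightarrow> complex fls" where
  "phiD p g = p * fls_deriv g"

definition phi :: "complex fls \<Rightarrow> complex fls fps" where
  "phi p = Abs_fps (\<lambda>j. (phiD p ^^ j) fls_X / of_nat (fact j))"

text \<open>phi(x,z)^k for k in Z (inverse taken in C((x))[[z]], i.e. iota_{x,z}).\<close>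
definition phipow :: "complex fls \<Rightarrow> int \<Rightarrow> complex fls fps" where
  "phipow p k = (if k \<ge> 0 then phi p ^ nat k else inverse (phi p) ^ nat (- k))"

text \<open>Coefficient (k,l) of f(x_1,x_2) a(x_1) b(x_2) applied to w, component i.\<close>
definition fab :: "(complex \<Rightarrow> 'v::ab_group_add \<Rightarrow> 'v) \<Rightarrow> (int \<Rightarrow> int \<Rightarrow> complex) \<Rightarrow> 'v hser \<Rightarrow> 'v hser
                   \<Rightarrow> int \<Rightarrow> int \<Rightarrow> 'v hmod \<Rightarrow> nat \<Rightarrow> 'v" where
  "fab sc F a b k l w i = (\<Sum>(c,d)\<in>{(c,d). F c d \<noteq> 0 \<and> a (k - c) (b (l - d) w) i \<noteq> 0}.
                             sc (F c d) (a (k - c) (b (l - d) w) i))"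

text \<open>f is admissible for the pair (a,b) mod h^n.\<close>
definition pair_ok :: "(complex \<Rightarrow> 'v::ab_group_add \<Rightarrow> 'v) \<Rightarrow> nat \<Rightarrow> 'v hser \<Rightarrow> 'v hser \<Rightarrow> (int \<Rightarrow> int \<Rightarrow> complex) \<Rightarrow> bool" where
  "pair_ok sc n a b F \<longleftrightarrow> laurent2 F \<and> F \<noteq> (\<lambda>c d. 0) \<and>
     (\<forall>w. \<exists>N. \<forall>k l. (k < N \<or> l < N) \<longrightarrow> (\<forall>i<n. fab sc F a b k l w i = 0))"

text \<open>(f(x_1,x)a(x_1)b(x))|_{x_1=phi(x,z)}: coefficient of z^j x^t, applied to w, component i.\<close>
definition subst_phi :: "(complex \<Rightarrow> 'v::ab_group_add \<Rightarrow> 'v) \<Rightarrow> complex fls \<Rightarrow> (int \<Rightarrow> int \<Rightarrow> complex) \<Rightarrow> 'v hser \<Rightarrow> 'v hser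
                   \<Rightarrow> nat \<Rightarrow> int \<Rightarrow> 'v hmod \<Rightarrow> nat \<Rightarrow> 'v" where
  "subst_phi sc p F a b j t w i =
     (\<Sum>(k,l)\<in>{(k,l). fab sc F a b k l w i \<noteq> 0 \<and> fls_nth (fps_nth (phipow p k) j) (t - l) \<noteq> 0}.
        sc (fls_nth (fps_nth (phipow p k) j) (t - l)) (fab sc F a b k l w i))"

text \<open>f(phi(x,z),x) in C((x))[[z]].\<close>
definition f_phi :: "complex fls \<Rightarrow> (int \<Rightarrow> int \<Rightarrow> complex) \<Rightarrow> complex fls fps" where
  "f_phi p F = Abs_fps (\<lambda>j. Abs_fls (\<lambda>t.
      \<Sum>(c,d)\<in>{(c,d). F c d \<noteq> 0 \<and> fls_nth (fps_nth (phipow p c) j) (t - d) \<noteq> 0}.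
         F c d * fls_nth (fps_nth (phipow p c) j) (t - d)))"

text \<open>iota_{x,z}(1/f(phi(x,z),x)) in C((x))((z)).\<close>
definition inv_f_phi :: "complex fls \<Rightarrow> (int \<Rightarrow> int \<Rightarrow> complex) \<Rightarrow> complex fls fls" where
  "inv_f_phi p F = inverse (fps_to_fls (f_phi p F))"

text \<open>Coefficient of z^{-m-1} x^t of Y^phi_E(a(x),z)b(x) mod h^n (using f), at w, component i.\<close>
definition Ycoef :: "(complex \<Rightarrow> 'v::ab_group_add \<Rightarrow> 'v) \<Rightarrow> complex fls \<Rightarrow> (int \<Rightarrow> int \<Rightarrow> complex) \<Rightarrow> 'v hser \<Rightarrow> 'v hser
                   \<Rightarrow> int \<Rightarrow> int \<Rightarrow> 'v hmod \<Rightarrow> nat \<Rightarrow> 'v" where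
  "Ycoef sc p F a b m t w i =
     (\<Sum>(j1,t1)\<in>{(j1,t1). fls_nth (fls_nth (inv_f_phi p F) j1) t1 \<noteq> 0 \<and> - m - 1 - j1 \<ge> 0 \<and>
                         subst_phi sc p F a b (nat (- m - 1 - j1)) (t - t1) w i \<noteq> 0}.
        sc (fls_nth (fls_nth (inv_f_phi p F) j1) t1) (subst_phi sc p F a b (nat (- m - 1 - j1)) (t - t1) w i))"

text \<open>a^phi_m b in E_h(W): the unique element whose reduction mod h^n is the
  (phi)-product of the reductions, for every n (f chosen admissible mod h^n).\<close>
definition Yphi :: "(complex \<Rightarrow> 'v::ab_group_add \<Rightarrow> 'v) \<Rightarrow> complex fls \<Rightarrow> 'v hser \<Rightarrow> 'v hser \<Rightarrow> int \<Rightarrow> 'v hser" where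
  "Yphi sc p a b m = (THE g. g \<in> Eh sc \<and>
      (\<forall>n\<ge>1. \<forall>t w. \<forall>i<n. g t w i = Ycoef sc p (SOME F. pair_ok sc n a b F) a b m t w i))"

definition Yclosed :: "(complex \<Rightarrow> 'v::ab_group_add \<Rightarrow> 'v) \<Rightarrow> complex fls \<Rightarrow> 'v hser set \<Rightarrow> bool" where
  "Yclosed sc p U \<longleftrightarrow> (\<forall>a\<in>U. \<forall>b\<in>U. \<forall>m. Yphi sc p a b m \<in> U)"

end

theory Submission
  imports Defs "HOL-Library.Groups_Big_Fun"
begin
unbundle fps_syntax
no_notation suminf (binder \<open>\<Sum>\<close> 10)

lemma fls_zero_below_mult:
  fixes f g :: "'a::comm_ring_1 fls"
  assumes "\<forall>n<A. f$$n = 0" "\<forall>n<B. g$$n = 0" "n < A + B"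
  shows "(f*g)$$n = 0"
proof (cases "f = 0 \<or> g = 0")
  case True then show ?thesis by auto
next
  case False
  then have "A \<le> fls_subdegree f" "B \<le> fls_subdegree g"
    using assms fls_subdegree_geI by auto
  then have "n < fls_subdegree f + fls_subdegree g" using assms(3) by linarith
  then show ?thesis by (rule fls_times_nth_eq0)
qed

lemma fls_mult_Sum_any:
  fixes f g :: "'a::comm_ring_1 fls"
  shows "(f*g)$$n = (\<Sum>i. f$$i * g$$(n-i))"
proof -
  have "(f*g)$$n = (\<Sum>i=fls_subdegree f..n - fls_subdegree g. f $$ i * g $$ (n - i))"
    by (rule fls_times_nth(2))
  also have "\<dots> = (\<Sum>i. f$$i * g$$(n-i))"
  proof (rule Sum_any.expand_superset[symmetric])
    show "{a. f $$ a * g $$ (n - a) \<noteq> 0} \<subseteq> {fls_subdegree f..n - fls_subdegree g}"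
    proof
      fix a assume "a \<in> {a. f $$ a * g $$ (n - a) \<noteq> 0}"
      then have "f$$a \<noteq> 0" "g$$(n-a) \<noteq> 0" by auto
      then show "a \<in> {fls_subdegree f..n - fls_subdegree g}"
        using fls_subdegree_leI[of f a] fls_subdegree_leI[of g "n-a"] by auto
    qed
  qed simp
  finally show ?thesis .
qed

lemma fls_mult_base_gen:
  fixes f g :: "'a::comm_ring_1 fls"
  assumes "\<forall>n<A. f$$n = 0" "\<forall>n<B. g$$n = 0"
  shows "(f*g)$$(A+B) = f$$A * g$$B"
proof -
  have "(f*g)$$(A+B) = (\<Sum>i. f$$i * g$$(A+B-i))" by (rule fls_mult_Sum_any)
  also have "\<dots> = (\<Sum>i. if i = A then f$$A * g$$B else 0)"
  proof (rule Sum_any.cong)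
    fix i show "f$$i * g$$(A+B-i) = (if i = A then f$$A * g$$B else 0)"
      using assms by (cases "i < A") (auto simp: not_less)
  qed
  also have "\<dots> = f$$A * g$$B" by simp
  finally show ?thesis .
qed

lemma fps_mult_Sum_any:
  fixes f g :: "'a::comm_ring_1 fps"
  shows "(f*g)$n = (\<Sum>i. if i \<le> n then f$i * g$(n-i) else 0)"
proof -
  have "(f*g)$n = (\<Sum>i=0..n. f$i * g$(n-i))" by (rule fps_mult_nth)
  also have "\<dots> = (\<Sum>i=0..n. if i \<le> n then f$i * g$(n-i) else 0)"
    by simp
  also have "\<dots> = (\<Sum>i. if i \<le> n then f$i * g$(n-i) else 0)"
    by (rule Sum_any.expand_superset[symmetric]) auto
  finally show ?thesis .
qed

context vector_space
begin

lemma scale_eq_0_iff': "scale c x = 0 \<longleftrightarrow> c = 0 \<or> x = 0"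
  by simp

lemma separating_functional:
  assumes "x \<noteq> 0"
  shows "\<exists>L. (\<forall>u v. L (u+v) = L u + L v) \<and> (\<forall>c u. L (scale c u) = c * L u) \<and> L x \<noteq> 0"
proof -
  have ind: "independent {x}" using assms by (simp add: independent_insert)
  define B where "B = extend_basis {x}"
  have iB: "independent B" and sB: "span B = UNIV" and xB: "x \<in> B"
    using independent_extend_basis[OF ind] span_extend_basis[OF ind] extend_basis_superset[OF ind]
    unfolding B_def by auto
  define L where "L v = representation B v x" for v
  have "\<forall>u v. L (u+v) = L u + L v"
    unfolding L_def using representation_add[OF iB] sB by auto
  moreover have "\<forall>c u. L (scale c u) = c * L u"
    unfolding L_def using representation_scale[OF iB] sB by auto
  moreover have "L x = 1"
    unfolding L_def using representation_basis[OF iB xB] by simp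
  ultimately show ?thesis by (intro exI[of _ L]) auto
qed

end

definition hsh :: "nat \<Rightarrow> 'v::zero hmod \<Rightarrow> 'v hmod" where
  "hsh K w = (\<lambda>n. if K \<le> n then w (n - K) else 0)"

lemma hsh_hsh: "hsh k (hsh K w) = hsh (k+K) w"
  by (auto simp: hsh_def fun_eq_iff)

lemma hsh_0[simp]: "hsh 0 w = w" by (simp add: hsh_def)

lemma hsh_at[simp]: "hsh K w (i + K) = w i"
  by (simp add: hsh_def)

locale cvs = vector_space scale for scale :: "complex \<Rightarrow> 'v::ab_group_add \<Rightarrow> 'v"
begin

lemma hsmult_hpow: "hsmult scale (hpow K) w = hsh K w"
proof
  fix n
  have "hsmult scale (hpow K) w n = (\<Sum>i\<le>n. scale (hpow K i) (w (n - i)))"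
    by (simp add: hsmult_def)
  also have "\<dots> = (\<Sum>i\<le>n. if i = K then w (n - K) else 0)"
    by (rule sum.cong) (auto simp: hpow_def)
  also have "\<dots> = hsh K w n" by (simp add: hsh_def)
  finally show "hsmult scale (hpow K) w n = hsh K w n" .
qed

lemma ssmult_hpow: "ssmult scale (hpow K) a = (\<lambda>m w. hsh K (a m w))"
  by (simp add: ssmult_def hsmult_hpow)

lemma hlinear_add: "hlinear scale A \<Longrightarrow> A (hadd v w) = hadd (A v) (A w)"
  by (simp add: hlinear_def)

lemma hlinear_smult: "hlinear scale A \<Longrightarrow> A (hsmult scale c w) = hsmult scale c (A w)"
  by (simp add: hlinear_def)

lemma hlinear_hsh: "hlinear scale A \<Longrightarrow> A (hsh K w) = hsh K (A w)"
  using hlinear_smult[of A "hpow K" w] by (simp add: hsmult_hpow)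

lemma hlinear_zero: "hlinear scale A \<Longrightarrow> A (\<lambda>_. 0) = (\<lambda>_. 0)"
proof -
  assume a: "hlinear scale A"
  have "A (hadd (\<lambda>_. 0) (\<lambda>_. 0)) = hadd (A (\<lambda>_. 0)) (A (\<lambda>_. 0))" by (rule hlinear_add[OF a])
  then show ?thesis by (simp add: hadd_def fun_eq_iff)
qed

lemma hlinear_comp:
  assumes a: "hlinear scale A" and agr: "\<forall>j\<le>i. v j = w j"
  shows "A v i = A w i"
proof -
  define d where "d = (\<lambda>n. v (n + Suc i) - w (n + Suc i))"
  have "v = hadd w (hsh (Suc i) d)"
    using agr by (auto simp: fun_eq_iff hadd_def hsh_def d_def)
  then have "A v = hadd (A w) (hsh (Suc i) (A d))"
    using hlinear_add[OF a] hlinear_hsh[OF a] by simp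
  then show ?thesis by (simp add: hadd_def hsh_def)
qed

lemma hlinear_comp_zero:
  assumes a: "hlinear scale A" and z: "\<forall>j\<le>i. v j = 0"
  shows "A v i = 0"
  using hlinear_comp[OF a, of i v "\<lambda>_. 0"] z hlinear_zero[OF a] by (simp add: fun_eq_iff)

lemma Eh_hlinear: "a \<in> Eh scale \<Longrightarrow> hlinear scale (a m)"
  by (simp add: Eh_def)

lemma Eh_trunc: "a \<in> Eh scale \<Longrightarrow> \<exists>N. \<forall>m<N. \<forall>i<n. a m w i = 0"
proof -
  assume a: "a \<in> Eh scale"
  show ?thesis
  proof (cases "n = 0")
    case True then show ?thesis by auto
  next
    case False then show ?thesis using a by (auto simp: Eh_def)
  qed
qed

lemma hsh_hsmult: "hsh K (hsmult scale c w) = hsmult scale c (hsh K w)"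
proof
  fix n
  show "hsh K (hsmult scale c w) n = hsmult scale c (hsh K w) n"
  proof (cases "K \<le> n")
    case True
    have "hsmult scale c (hsh K w) n = (\<Sum>i\<le>n. scale (c i) (hsh K w (n - i)))"
      by (simp add: hsmult_def)
    also have "\<dots> = (\<Sum>i\<le>n - K. scale (c i) (w (n - K - i)))"
      using True by (intro sum.mono_neutral_cong_right) (auto simp: hsh_def algebra_simps)
    finally show ?thesis using True by (simp add: hsh_def hsmult_def)
  next
    case False
    then show ?thesis by (auto simp: hsh_def hsmult_def intro!: sum.neutral)
  qed
qed

lemma hlinear_hsh_comp: "hlinear scale A \<Longrightarrow> hlinear scale (\<lambda>w. hsh K (A w))"
proof -
  assume a: "hlinear scale A"
  have "hsh K (A (hadd v w)) = hadd (hsh K (A v)) (hsh K (A w))" for v w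
    using hlinear_add[OF a] by (auto simp: hadd_def hsh_def fun_eq_iff)
  moreover have "hsh K (A (hsmult scale c w)) = hsmult scale c (hsh K (A w))" for c w
    using hlinear_smult[OF a] hsh_hsmult by simp
  ultimately show ?thesis by (simp add: hlinear_def)
qed

lemma Eh_hsh: "a \<in> Eh scale \<Longrightarrow> (\<lambda>m w. hsh K (a m w)) \<in> Eh scale"
proof -
  assume a: "a \<in> Eh scale"
  have "hlinear scale (\<lambda>w. hsh K (a m w))" for m
    using hlinear_hsh_comp[OF Eh_hlinear[OF a]] .
  moreover have "\<exists>N. \<forall>m<N. \<forall>i<n. hsh K (a m w) i = 0" for n w
  proof -
    obtain N where "\<forall>m<N. \<forall>i<n. a m w i = 0" using Eh_trunc[OF a] by blast
    then show ?thesis by (auto simp: hsh_def intro!: exI[of _ N])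
  qed
  ultimately show ?thesis by (simp add: Eh_def)
qed

end

lemma opprod_Nil[simp]: "opprod [] ms w = w"
  by (simp add: opprod_def)

lemma opprod_Cons[simp]: "opprod (a # as) (m # ms) w = a m (opprod as ms w)"
  by (simp add: opprod_def)

lemma qc_transfer:
  assumes len: "length as' = length as"
    and fi: "\<forall>i<n. f i < n'"
    and eq: "\<forall>i<n. \<forall>ms w. length ms = length as \<longrightarrow> opprod as ms w i = opprod as' ms w (f i)"
    and qc: "qc_at sc n' as'"
  shows "qc_at sc n as"
proof -
  define r where "r = length as"
  from qc obtain F where F: "laurent2 F" "F \<noteq> (\<lambda>a b. 0)"
    and H: "\<forall>w. \<exists>N. \<forall>ns. length ns = r \<longrightarrow> (\<exists>l<r. ns ! l < N) \<longrightarrow>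
          (\<forall>i<n'. (\<Sum>ks\<in>{ks. length ks = r \<and> pairprod r F ks \<noteq> 0 \<and>
                              opprod as' (map2 (-) ns ks) w i \<noteq> 0}.
                     sc (pairprod r F ks) (opprod as' (map2 (-) ns ks) w i)) = 0)"
    unfolding qc_at_def Let_def len r_def by blast
  show ?thesis
    unfolding qc_at_def Let_def r_def[symmetric]
  proof (intro exI[of _ F] conjI F allI)
    fix w
    from H obtain N where N: "\<forall>ns. length ns = r \<longrightarrow> (\<exists>l<r. ns ! l < N) \<longrightarrow>
          (\<forall>i<n'. (\<Sum>ks\<in>{ks. length ks = r \<and> pairprod r F ks \<noteq> 0 \<and>
                              opprod as' (map2 (-) ns ks) w i \<noteq> 0}.
                     sc (pairprod r F ks) (opprod as' (map2 (-) ns ks) w i)) = 0)" by blast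
    show "\<exists>N. \<forall>ns. length ns = r \<longrightarrow> (\<exists>l<r. ns ! l < N) \<longrightarrow>
          (\<forall>i<n. (\<Sum>ks\<in>{ks. length ks = r \<and> pairprod r F ks \<noteq> 0 \<and>
                              opprod as (map2 (-) ns ks) w i \<noteq> 0}.
                     sc (pairprod r F ks) (opprod as (map2 (-) ns ks) w i)) = 0)"
    proof (intro exI[of _ N] allI impI)
      fix ns i assume ns: "length ns = r" "\<exists>l<r. ns ! l < N" and i: "i < n"
      have e: "opprod as (map2 (-) ns ks) w i = opprod as' (map2 (-) ns ks) w (f i)"
        if "length ks = r" for ks
        using eq i that ns(1) unfolding r_def by auto
      have "{ks. length ks = r \<and> pairprod r F ks \<noteq> 0 \<and> opprod as (map2 (-) ns ks) w i \<noteq> 0}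
          = {ks. length ks = r \<and> pairprod r F ks \<noteq> 0 \<and> opprod as' (map2 (-) ns ks) w (f i) \<noteq> 0}"
        using e by auto
      then have "(\<Sum>ks\<in>{ks. length ks = r \<and> pairprod r F ks \<noteq> 0 \<and>
                              opprod as (map2 (-) ns ks) w i \<noteq> 0}.
                     sc (pairprod r F ks) (opprod as (map2 (-) ns ks) w i)) =
            (\<Sum>ks\<in>{ks. length ks = r \<and> pairprod r F ks \<noteq> 0 \<and>
                              opprod as' (map2 (-) ns ks) w (f i) \<noteq> 0}.
                     sc (pairprod r F ks) (opprod as' (map2 (-) ns ks) w (f i)))"
        using e by (auto intro!: sum.cong)
      also have "\<dots> = 0" using N ns fi i by blast
      finally show "(\<Sum>ks\<in>{ks. length ks = r \<and> pairprod r F ks \<noteq> 0 \<and>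
                              opprod as (map2 (-) ns ks) w i \<noteq> 0}.
                     sc (pairprod r F ks) (opprod as (map2 (-) ns ks) w i)) = 0" .
    qed
  qed
qed

context cvs
begin

lemma opprod_scaled:
  assumes "\<forall>a\<in>set as. a \<in> Eh scale" "length ms = length as"
  shows "opprod (map (\<lambda>a m w. hsh (kk a) (a m w)) as) ms w = hsh (sum_list (map kk as)) (opprod as ms w)"
  using assms
proof (induction as arbitrary: ms)
  case Nil then show ?case by simp
next
  case (Cons a as)
  then obtain m ms' where ms: "ms = m # ms'" by (cases ms) auto
  have lin: "hlinear scale (a m)" using Cons.prems Eh_hlinear by auto
  have "opprod (map (\<lambda>a m w. hsh (kk a) (a m w)) (a # as)) ms w =
        hsh (kk a) (a m (hsh (sum_list (map kk as)) (opprod as ms' w)))"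
    using Cons ms by simp
  also have "\<dots> = hsh (kk a + sum_list (map kk as)) (a m (opprod as ms' w))"
    by (simp add: hlinear_hsh[OF lin] hsh_hsh)
  finally show ?case using ms by simp
qed

lemma opprod_agree:
  assumes "\<forall>a\<in>set as. a \<in> Eh scale" "length ms = length as"
    and "\<forall>a\<in>set as. \<forall>m y. \<forall>i<n. a m y i = uu a m y i"
  shows "\<forall>i<n. opprod as ms w i = opprod (map uu as) ms w i"
  using assms
proof (induction as arbitrary: ms)
  case Nil then show ?case by simp
next
  case (Cons a as)
  then obtain m ms' where ms: "ms = m # ms'" by (cases ms) auto
  have lin: "hlinear scale (a m)" using Cons.prems Eh_hlinear by auto
  have IH: "\<forall>i<n. opprod as ms' w i = opprod (map uu as) ms' w i"
    using Cons ms by auto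
  show ?case
  proof (intro allI impI)
    fix i assume i: "i < n"
    have "a m (opprod as ms' w) i = a m (opprod (map uu as) ms' w) i"
      using IH i by (intro hlinear_comp[OF lin]) auto
    also have "\<dots> = uu a m (opprod (map uu as) ms' w) i"
      using Cons.prems(3) i by auto
    finally show "opprod (a # as) ms w i = opprod (map uu (a # as)) ms w i"
      using ms by simp
  qed
qed

lemma hqc_hsat:
  assumes sub: "hsubmodule scale U" and qc: "hqc scale U"
  shows "hqc scale (hsat scale U)"
  unfolding hqc_def
proof (intro allI impI)
  fix as n assume as: "set as \<subseteq> hsat scale U" and n: "1 \<le> (n::nat)"
  define kk where "kk a = (SOME k. ssmult scale (hpow k) a \<in> U)" for a
  have Eh: "\<forall>a\<in>set as. a \<in> Eh scale" using as by (auto simp: hsat_def)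
  have kU: "ssmult scale (hpow (kk a)) a \<in> U" if "a \<in> set as" for a
    using as that unfolding kk_def hsat_def by (auto intro: someI_ex)
  define as' where "as' = map (\<lambda>a m w. hsh (kk a) (a m w)) as"
  define K where "K = sum_list (map kk as)"
  have "set as' \<subseteq> U" using kU by (auto simp: as'_def ssmult_hpow)
  then have "qc_at scale (n + K) as'" using qc n by (auto simp: hqc_def)
  then show "qc_at scale n as"
  proof (rule qc_transfer[where f = "\<lambda>i. i + K", rotated 3])
    show "length as' = length as" by (simp add: as'_def)
    show "\<forall>i<n. i + K < n + K" by simp
    show "\<forall>i<n. \<forall>ms w. length ms = length as \<longrightarrow> opprod as ms w i = opprod as' ms w (i + K)"
      using opprod_scaled[OF Eh] by (simp add: as'_def K_def)
  qed
qed

lemma hclosure_sub: "hclosure scale U \<subseteq> Eh scale"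
  by (auto simp: hclosure_def)

lemma hqc_hclosure:
  assumes sub: "hsubmodule scale U" and qc: "hqc scale U"
  shows "hqc scale (hclosure scale U)"
  unfolding hqc_def
proof (intro allI impI)
  fix as n assume as: "set as \<subseteq> hclosure scale U" and n: "1 \<le> (n::nat)"
  define uu where "uu a = (SOME u. u \<in> U \<and> (\<exists>e\<in>Eh scale. a = sadd u (ssmult scale (hpow n) e)))" for a
  have Eh: "\<forall>a\<in>set as. a \<in> Eh scale" using as by (auto simp: hclosure_def)
  have uU: "uu a \<in> U \<and> (\<exists>e\<in>Eh scale. a = sadd (uu a) (ssmult scale (hpow n) e))" if "a \<in> set as" for a
  proof -
    have "\<exists>u. u \<in> U \<and> (\<exists>e\<in>Eh scale. a = sadd u (ssmult scale (hpow n) e))"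
      using as that unfolding hclosure_def by blast
    then show ?thesis unfolding uu_def by (rule someI_ex)
  qed
  have agr: "\<forall>a\<in>set as. \<forall>m y. \<forall>i<n. a m y i = uu a m y i"
  proof (intro ballI allI impI)
    fix a m y i assume a: "a \<in> set as" and i: "i < n"
    obtain e where ae: "a = sadd (uu a) (ssmult scale (hpow n) e)" using uU[OF a] by blast
    have "a m y i = sadd (uu a) (ssmult scale (hpow n) e) m y i"
      by (subst (1) ae) (rule refl)
    then show "a m y i = uu a m y i" using i by (simp add: sadd_def ssmult_hpow hadd_def hsh_def)
  qed
  have "set (map uu as) \<subseteq> U" using uU by auto
  then have "qc_at scale n (map uu as)" using qc n by (auto simp: hqc_def)
  then show "qc_at scale n as"
  proof (rule qc_transfer[where f = "\<lambda>i. i", rotated 3])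
    show "length (map uu as) = length as" by simp
    show "\<forall>i<n. i < n" by simp
    show "\<forall>i<n. \<forall>ms w. length ms = length as \<longrightarrow> opprod as ms w i = opprod (map uu as) ms w i"
      using opprod_agree[OF Eh _ agr] by auto
  qed
qed

end

definition ipow :: "'a::{comm_ring_1,inverse} \<Rightarrow> int \<Rightarrow> 'a" where
  "ipow u k = (if k \<ge> 0 then u ^ nat k else inverse u ^ nat (- k))"

lemma pow_cancel:
  fixes u v :: "'a::comm_ring_1"
  assumes uv: "u * v = 1" and mn: "m + n' = m' + n"
  shows "u^m * v^n = u^m' * v^n'"
proof -
  have "u^m * v^n = u^m * v^n * (u*v)^n'" using uv by simp
  also have "\<dots> = u^(m+n') * v^(n+n')" by (simp add: power_add power_mult_distrib algebra_simps)
  also have "\<dots> = u^m' * v^n' * (u*v)^n" using mn by (simp add: power_add power_mult_distrib algebra_simps)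
  also have "\<dots> = u^m' * v^n'" using uv by simp
  finally show ?thesis .
qed

lemma ipow_alt:
  fixes u :: "'a::{comm_ring_1,inverse}"
  shows "ipow u k = u ^ nat k * inverse u ^ nat (-k)"
  by (simp add: ipow_def)

lemma ipow_add:
  fixes u :: "'a::{comm_ring_1,inverse}"
  assumes uv: "u * inverse u = 1"
  shows "ipow u a * ipow u b = ipow u (a + b)"
proof -
  have "ipow u a * ipow u b = u^(nat a + nat b) * inverse u ^ (nat (-a) + nat (-b))"
    by (simp add: ipow_alt power_add algebra_simps)
  also have "\<dots> = u^(nat (a+b)) * inverse u ^ (nat (-(a+b)))"
    by (rule pow_cancel[OF uv]) linarith
  finally show ?thesis by (simp add: ipow_alt)
qed

lemma ipow_0[simp]: "ipow u 0 = 1" by (simp add: ipow_def)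

lemma ipow_nat: "ipow u (int n) = u ^ n" by (simp add: ipow_def)

lemma phipow_ipow: "phipow p k = ipow (phi p) k"
  by (simp add: phipow_def ipow_def)

locale phictx =
  fixes p :: "complex fls"
  assumes p_nz: "p \<noteq> 0"
begin

definition ee :: int where "ee = fls_subdegree p - 1"

definition Wt :: "complex fls fps \<Rightarrow> int \<Rightarrow> bool" where
  "Wt P w \<longleftrightarrow> (\<forall>j s. s < w + int j * ee \<longrightarrow> (P$j)$$s = 0)"

lemma WtD: "Wt P w \<Longrightarrow> s < w + int j * ee \<Longrightarrow> (P$j)$$s = 0"
  by (simp add: Wt_def)

lemma Wt_mult:
  assumes "Wt P a" "Wt Q b"
  shows "Wt (P*Q) (a+b)"
  unfolding Wt_def
proof (intro allI impI)
  fix j s assume s: "s < a + b + int j * ee"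
  have "((P*Q)$j)$$s = (\<Sum>i=0..j. (P$i * Q$(j-i))$$s)"
    by (simp add: fps_mult_nth fls_nth_sum)
  also have "\<dots> = 0"
  proof (rule sum.neutral, intro ballI)
    fix i assume i: "i \<in> {0..j}"
    have e: "int j * ee = int i * ee + int (j-i) * ee" using i by (simp add: of_nat_diff algebra_simps)
    show "(P$i * Q$(j-i))$$s = 0"
      by (rule fls_zero_below_mult[where A = "a + int i * ee" and B = "b + int (j-i) * ee"])
         (use assms s e in \<open>auto simp: Wt_def\<close>)
  qed
  finally show "((P*Q)$j)$$s = 0" .
qed

lemma Wt_one: "Wt 1 0"
  by (auto simp: Wt_def)

lemma Wt_power: "Wt P a \<Longrightarrow> Wt (P^n) (int n * a)"
proof (induction n)
  case 0 then show ?case using Wt_one by simp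
next
  case (Suc n)
  then have "Wt (P * P^n) (a + int n * a)" using Wt_mult by blast
  then show ?case by (simp add: algebra_simps)
qed

lemma phiD_below:
  assumes "\<forall>s<A. g$$s = 0" "s < A + ee"
  shows "(phiD p g)$$s = 0"
proof -
  have d: "\<forall>s<A - 1. fls_deriv g $$ s = 0" using assms(1) by simp
  have pp: "\<forall>s<fls_subdegree p. p $$ s = 0" by simp
  have "s < fls_subdegree p + (A - 1)" using assms(2) by (simp add: ee_def)
  then show ?thesis unfolding phiD_def by (rule fls_zero_below_mult[OF pp d])
qed

lemma phiD_iter_below: "s < 1 + int j * ee \<Longrightarrow> ((phiD p ^^ j) fls_X)$$s = 0"
proof (induction j arbitrary: s)
  case 0 then show ?case by simp
next
  case (Suc j)
  have "(phiD p ((phiD p ^^ j) fls_X))$$s = 0"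
    by (rule phiD_below[where A = "1 + int j * ee"]) (use Suc in \<open>auto simp: algebra_simps\<close>)
  then show ?case by simp
qed

lemma div_of_nat_nth: "((f::complex fls) / of_nat c)$$s = f$$s / of_nat c"
proof -
  have i: "inverse (of_nat c :: complex fls) = fls_const (inverse (of_nat c))"
    by (simp only: fls_of_nat fls_inverse_const)
  have eq: "f / of_nat c = f * fls_const (inverse (of_nat c))"
    by (simp only: divide_inverse i)
  have "(f / of_nat c)$$s = (f * fls_const (inverse (of_nat c)))$$s" by (simp only: eq)
  also have "\<dots> = f$$s * inverse (of_nat c)" by (rule fls_mult_const_nth(2))
  also have "\<dots> = f$$s / of_nat c" by (simp add: divide_inverse)
  finally show ?thesis .
qed

lemma phi_nth: "phi p $ j = (phiD p ^^ j) fls_X / of_nat (fact j)"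
  by (simp add: phi_def)

lemma phi_nth_nth: "(phi p $ j)$$s = ((phiD p ^^ j) fls_X)$$s / of_nat (fact j)"
  by (simp only: phi_nth div_of_nat_nth)

lemma Wt_phi: "Wt (phi p) 1"
  unfolding Wt_def using phiD_iter_below by (simp add: phi_nth_nth)

lemma phi_0: "phi p $ 0 = fls_X"
  by (simp add: phi_nth)

lemma phi_1: "phi p $ Suc 0 = p"
  by (simp add: phi_nth phiD_def)

lemma phi_inv: "inverse (phi p) * phi p = 1"
  by (rule inverse_mult_eq_1) (simp add: phi_0)

lemma phi_inv': "phi p * inverse (phi p) = 1"
  using phi_inv by (simp add: mult.commute)

lemma Wt_inv_phi: "Wt (inverse (phi p)) (-1)"
  unfolding Wt_def
proof (rule allI)
  fix j
  show "\<forall>s. s < -1 + int j * ee \<longrightarrow> (inverse (phi p) $ j) $$ s = 0"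
  proof (induction j rule: less_induct)
    case (less j)
    show ?case
    proof (cases j)
      case 0
      then show ?thesis by (simp add: phi_0 fls_inverse_X)
    next
      case (Suc k)
      have eq: "inverse (phi p) $ j = - inverse (phi p $ 0) * (\<Sum>i = 1..j. phi p $ i * inverse (phi p) $ (j - i))"
        using Suc by (simp add: fps_inverse_def)
      show ?thesis
      proof (intro allI impI)
        fix s assume s: "s < -1 + int j * ee"
        have xi: "\<forall>s< -1. inverse (phi p $ 0) $$ s = 0" by (simp add: phi_0 fls_inverse_X)
        have sm: "\<forall>s<int j * ee. (\<Sum>i = 1..j. phi p $ i * inverse (phi p) $ (j - i)) $$ s = 0"
        proof (intro allI impI)
          fix s assume s: "s < int j * ee"
          show "(\<Sum>i = 1..j. phi p $ i * inverse (phi p) $ (j - i)) $$ s = 0"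
            unfolding fls_nth_sum
          proof (rule sum.neutral, intro ballI)
            fix i assume i: "i \<in> {1..j}"
            have e: "int j * ee = (1 + int i * ee) + (-1 + int (j-i) * ee)" using i
              by (simp add: of_nat_diff algebra_simps)
            show "(phi p $ i * inverse (phi p) $ (j - i)) $$ s = 0"
              by (rule fls_zero_below_mult[where A = "1 + int i * ee" and B = "-1 + int (j-i) * ee"])
                 (use i s e Wt_phi less[of "j - i"] in \<open>auto simp: Wt_def\<close>)
          qed
        qed
        have "(- inverse (phi p $ 0) * (\<Sum>i = 1..j. phi p $ i * inverse (phi p) $ (j - i))) $$ s = 0"
          by (rule fls_zero_below_mult[where A = "-1" and B = "int j * ee"]) (use xi sm s in auto)
        then show "(inverse (phi p) $ j) $$ s = 0" using eq by simp
      qed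
    qed
  qed
qed

lemma Wt_phipow: "Wt (phipow p k) k"
proof (cases "k \<ge> 0")
  case True
  then show ?thesis using Wt_power[OF Wt_phi, of "nat k"] by (simp add: phipow_def)
next
  case False
  then show ?thesis using Wt_power[OF Wt_inv_phi, of "nat (-k)"] by (simp add: phipow_def)
qed

lemma phipow_below: "s < k + int j * ee \<Longrightarrow> (phipow p k $ j)$$s = 0"
  using Wt_phipow WtD by blast

lemma phipow_add: "phipow p a * phipow p b = phipow p (a + b)"
  unfolding phipow_ipow by (rule ipow_add[OF phi_inv'])

definition sym :: "int \<Rightarrow> complex fls fps \<Rightarrow> complex fps" where
  "sym w P = Abs_fps (\<lambda>j. (P$j)$$(w + int j * ee))"

lemma sym_nth[simp]: "sym w P $ j = (P$j)$$(w + int j * ee)"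
  by (simp add: sym_def)

lemma sym_mult:
  assumes "Wt P a" "Wt Q b"
  shows "sym (a+b) (P*Q) = sym a P * sym b Q"
proof (rule fps_ext)
  fix j
  have "sym (a+b) (P*Q) $ j = (\<Sum>i=0..j. (P$i * Q$(j-i))$$(a + b + int j * ee))"
    by (simp add: fps_mult_nth fls_nth_sum)
  also have "\<dots> = (\<Sum>i=0..j. (P$i)$$(a + int i * ee) * (Q$(j-i))$$(b + int (j-i) * ee))"
  proof (rule sum.cong[OF refl])
    fix i assume i: "i \<in> {0..j}"
    have e: "a + b + int j * ee = (a + int i * ee) + (b + int (j-i) * ee)" using i
      by (simp add: of_nat_diff algebra_simps)
    show "(P$i * Q$(j-i))$$(a + b + int j * ee) = (P$i)$$(a + int i * ee) * (Q$(j-i))$$(b + int (j-i) * ee)"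
      unfolding e by (rule fls_mult_base_gen) (use assms in \<open>auto simp: Wt_def\<close>)
  qed
  also have "\<dots> = (sym a P * sym b Q) $ j" by (simp add: fps_mult_nth)
  finally show "sym (a+b) (P*Q) $ j = (sym a P * sym b Q) $ j" .
qed

lemma sym_one: "sym 0 1 = 1"
  by (rule fps_ext) (simp)

lemma sym_power: "Wt P a \<Longrightarrow> sym (int n * a) (P^n) = (sym a P)^n"
proof (induction n)
  case 0 then show ?case using sym_one by simp
next
  case (Suc n)
  have "sym (a + int n * a) (P * P^n) = sym a P * sym (int n * a) (P^n)"
    by (rule sym_mult[OF Suc.prems Wt_power[OF Suc.prems]])
  then show ?case using Suc by (simp add: algebra_simps)
qed

definition psi :: "complex fps" where "psi = sym 1 (phi p)"

lemma psi_0: "psi $ 0 = 1"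
  by (simp add: psi_def phi_0)

lemma psi_1: "psi $ 1 \<noteq> 0"
proof -
  have "psi $ 1 = (phi p $ Suc 0) $$ (1 + int 1 * ee)" by (simp add: psi_def)
  also have "\<dots> = p $$ fls_subdegree p" by (simp add: phi_1 ee_def)
  finally show ?thesis using p_nz by simp
qed

lemma sym_inv_phi: "sym (-1) (inverse (phi p)) = inverse psi"
proof -
  have "sym (-1 + 1) (inverse (phi p) * phi p) = sym (-1) (inverse (phi p)) * psi"
    unfolding psi_def by (rule sym_mult[OF Wt_inv_phi Wt_phi])
  then have x: "sym (-1) (inverse (phi p)) * psi = 1" using phi_inv sym_one by simp
  have y: "psi * inverse psi = 1" by (rule inverse_mult_eq_1') (simp add: psi_0)
  have "sym (-1) (inverse (phi p)) = sym (-1) (inverse (phi p)) * (psi * inverse psi)"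
    using y by simp
  also have "\<dots> = (sym (-1) (inverse (phi p)) * psi) * inverse psi"
    by (simp only: mult.assoc)
  also have "\<dots> = inverse psi" using x by simp
  finally show ?thesis .
qed

lemma sym_phipow: "sym k (phipow p k) = ipow psi k"
proof (cases "k \<ge> 0")
  case True
  have e1: "phipow p k = phi p ^ nat k" using True by (simp add: phipow_def)
  have e2: "ipow psi k = psi ^ nat k" using True by (simp add: ipow_def)
  have e3: "int (nat k) * 1 = k" using True by simp
  have "sym (int (nat k) * 1) (phi p ^ nat k) = psi ^ nat k"
    unfolding psi_def by (rule sym_power[OF Wt_phi])
  then show ?thesis by (simp only: e1 e2 e3)
next
  case False
  have e1: "phipow p k = inverse (phi p) ^ nat (-k)" using False by (simp add: phipow_def)
  have e2: "ipow psi k = inverse psi ^ nat (-k)" using False by (simp add: ipow_def)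
  have e3: "int (nat (-k)) * (-1) = k" using False by simp
  have "sym (int (nat (-k)) * (-1)) (inverse (phi p) ^ nat (-k)) = inverse psi ^ nat (-k)"
    unfolding sym_inv_phi[symmetric] by (rule sym_power[OF Wt_inv_phi])
  then show ?thesis by (simp only: e1 e2 e3)
qed

lemma phipow_lead: "(phipow p k $ j)$$(k + int j * ee) = ipow psi k $ j"
proof -
  have "sym k (phipow p k) $ j = ipow psi k $ j" by (simp only: sym_phipow)
  then show ?thesis by simp
qed

end

lemma fps_nonvanish_nat:
  fixes q :: "complex fps"
  assumes q1: "q $ 1 \<noteq> 0"
  shows "(\<Sum>n\<le>d. fps_const (c n) * q^n) = 0 \<Longrightarrow> \<forall>n\<le>d. c n = 0"
proof (induction d arbitrary: c)
  case 0
  then show ?case by (simp add: fps_const_eq_0_iff) 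
next
  case (Suc d)
  have dq: "fps_deriv q \<noteq> 0"
  proof
    assume h: "fps_deriv q = 0"
    have "q $ 1 = fps_deriv q $ 0" by simp
    then show False using q1 h by (metis fps_zero_nth)
  qed
  have "fps_deriv (\<Sum>n\<le>Suc d. fps_const (c n) * q^n) = 0" using Suc.prems by simp
  then have "(\<Sum>n\<le>Suc d. fps_const (c n) * (fps_const (of_nat n) * fps_deriv q * q^(n-1))) = 0"
    by (simp only: fps_deriv_sum fps_deriv_mult_const_left fps_deriv_power)
  moreover have "(\<Sum>n\<le>Suc d. fps_const (c n) * (fps_const (of_nat n) * fps_deriv q * q^(n-1))) =
     fps_const (c 0) * (fps_const (of_nat 0) * fps_deriv q * q^(0-1)) +
     (\<Sum>m\<le>d. fps_const (c (Suc m)) * (fps_const (of_nat (Suc m)) * fps_deriv q * q^(Suc m - 1)))"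
    by (rule sum.atMost_Suc_shift)
  ultimately have "(\<Sum>m\<le>d. fps_const (c (Suc m)) * (fps_const (of_nat (Suc m)) * fps_deriv q * q^m)) = 0"
    by (simp del: of_nat_Suc)
  moreover have "(\<Sum>m\<le>d. fps_const (c (Suc m) * of_nat (Suc m)) * q^m) * fps_deriv q =
     (\<Sum>m\<le>d. fps_const (c (Suc m)) * (fps_const (of_nat (Suc m)) * fps_deriv q * q^m))"
    unfolding sum_distrib_right by (rule sum.cong) (simp_all add: mult_ac del: of_nat_Suc)
  ultimately have "(\<Sum>m\<le>d. fps_const (c (Suc m) * of_nat (Suc m)) * q^m) * fps_deriv q = 0"
    by simp
  then have "(\<Sum>m\<le>d. fps_const (c (Suc m) * of_nat (Suc m)) * q^m) = 0"
    using dq by (simp only: mult_eq_0_iff) simp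
  then have h: "\<forall>m\<le>d. c (Suc m) * of_nat (Suc m) = 0" by (rule Suc.IH)
  have h': "\<forall>m\<le>d. c (Suc m) = 0"
  proof (intro allI impI)
    fix m assume "m \<le> d"
    then have a: "c (Suc m) * of_nat (Suc m) = 0" using h by blast
    have b: "(of_nat (Suc m)::complex) \<noteq> 0" by (simp only: of_nat_eq_0_iff)
    show "c (Suc m) = 0" using a b by (metis mult_eq_0_iff)
  qed
  have z0: "(\<Sum>m\<le>d. fps_const (c (Suc m)) * q^Suc m) = 0" using h' by (intro sum.neutral) auto
  have "(\<Sum>n\<le>Suc d. fps_const (c n) * q^n) = fps_const (c 0)"
    by (simp only: sum.atMost_Suc_shift z0) simp
  then have "c 0 = 0" using Suc.prems by (simp add: fps_const_eq_0_iff)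
  then show ?case
  proof (intro allI impI)
    fix n assume "c 0 = 0" "n \<le> Suc d"
    then show "c n = 0" using h' by (cases n) auto
  qed
qed

lemma fps_nonvanish_natset:
  fixes q :: "complex fps"
  assumes q1: "q $ 1 \<noteq> 0" and A: "finite A"
    and z: "(\<Sum>n\<in>A. fps_const (c n) * q^n) = 0"
  shows "\<forall>n\<in>A. c n = 0"
proof (cases "A = {}")
  case True then show ?thesis by simp
next
  case False
  define d where "d = Max A"
  define c' where "c' n = (if n \<in> A then c n else 0)" for n
  have sub: "A \<subseteq> {..d}" using A d_def by auto
  have "(\<Sum>n\<le>d. fps_const (c' n) * q^n) = (\<Sum>n\<in>A. fps_const (c n) * q^n)"
    by (rule sum.mono_neutral_cong_right) (use sub in \<open>auto simp: c'_def\<close>)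
  then have "\<forall>n\<le>d. c' n = 0" using z fps_nonvanish_nat[OF q1] by simp
  then show ?thesis using sub by (auto simp: c'_def)
qed

lemma fps_nonvanish_int:
  fixes q :: "complex fps"
  assumes q0: "q $ 0 = 1" and q1: "q $ 1 \<noteq> 0" and K: "finite K"
    and z: "(\<Sum>k\<in>K. fps_const (c k) * ipow q k) = 0"
  shows "\<forall>k\<in>K. c k = 0"
proof (cases "K = {}")
  case True then show ?thesis by simp
next
  case False
  define k0 where "k0 = Min K"
  have k0: "\<forall>k\<in>K. k0 \<le> k" using K k0_def by auto
  have qi: "q * inverse q = 1" by (rule inverse_mult_eq_1') (simp add: q0)
  have "(\<Sum>k\<in>K. fps_const (c k) * ipow q k) * ipow q (-k0) =
        (\<Sum>k\<in>K. fps_const (c k) * q ^ nat (k - k0))"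
    unfolding sum_distrib_right
  proof (rule sum.cong[OF refl])
    fix k assume k: "k \<in> K"
    have "ipow q k * ipow q (-k0) = ipow q (k - k0)" using ipow_add[OF qi] by simp
    also have "\<dots> = q ^ nat (k - k0)" using k0 k by (simp add: ipow_def)
    finally show "fps_const (c k) * ipow q k * ipow q (- k0) = fps_const (c k) * q ^ nat (k - k0)"
      by (simp add: mult.assoc)
  qed
  then have z2: "(\<Sum>k\<in>K. fps_const (c k) * q ^ nat (k - k0)) = 0" using z by simp
  have inj: "inj_on (\<lambda>k. nat (k - k0)) K"
  proof (rule inj_onI)
    fix x y assume "x \<in> K" "y \<in> K" "nat (x - k0) = nat (y - k0)"
    then have "x - k0 = y - k0" using k0 eq_nat_nat_iff by auto
    then show "x = y" by simp
  qed
  define c' where "c' n = c (k0 + int n)" for n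
  have "(\<Sum>n\<in>(\<lambda>k. nat (k - k0)) ` K. fps_const (c' n) * q ^ n) =
        (\<Sum>k\<in>K. fps_const (c' (nat (k - k0))) * q ^ nat (k - k0))"
    by (rule sum.reindex[OF inj, unfolded comp_def])
  also have "\<dots> = (\<Sum>k\<in>K. fps_const (c k) * q ^ nat (k - k0))"
    using k0 by (intro sum.cong) (auto simp: c'_def)
  finally have s0: "(\<Sum>n\<in>(\<lambda>k. nat (k - k0)) ` K. fps_const (c' n) * q ^ n) = 0"
    using z2 by simp
  have fin: "finite ((\<lambda>k. nat (k - k0)) ` K)" using K by simp
  have "\<forall>n\<in>(\<lambda>k. nat (k - k0)) ` K. c' n = 0"
    by (rule fps_nonvanish_natset[OF q1 fin s0])
  then show ?thesis using k0 by (auto simp: c'_def)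
qed

context phictx
begin

definition Sx :: "complex fls fls \<Rightarrow> complex fls fps" where
  "Sx X = Abs_fps (\<lambda>j. Abs_fls (\<lambda>t. \<Sum>(k,l). X$$l$$k * (phipow p k $ j)$$(t-l)))"

definition Rbd :: "int \<Rightarrow> complex fls fls \<Rightarrow> bool" where
  "Rbd N X \<longleftrightarrow> (\<forall>l k. (l < N \<or> k < N) \<longrightarrow> X$$l$$k = 0)"

lemma RbdD: "Rbd N X \<Longrightarrow> l < N \<or> k < N \<Longrightarrow> X$$l$$k = 0"
  unfolding Rbd_def by blast

lemma Sx_supp:
  assumes "Rbd N X"
  shows "{(k,l). X$$l$$k * (phipow p k $ j)$$(t-l) \<noteq> 0} \<subseteq> {N..t - int j * ee - N} \<times> {N..t - int j * ee - N}"
proof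
  fix x assume "x \<in> {(k,l). X$$l$$k * (phipow p k $ j)$$(t-l) \<noteq> 0}"
  then obtain k l where x: "x = (k,l)" and nz: "X$$l$$k \<noteq> 0" "(phipow p k $ j)$$(t-l) \<noteq> 0" by auto
  have "N \<le> k" using nz(1) RbdD[OF assms, of l k] by force
  moreover have "N \<le> l" using nz(1) RbdD[OF assms, of l k] by force
  moreover have "k + int j * ee \<le> t - l"
  proof (rule ccontr)
    assume "\<not> k + int j * ee \<le> t - l"
    then have "t - l < k + int j * ee" by simp
    then show False using nz(2) phipow_below by blast
  qed
  ultimately show "x \<in> {N..t - int j * ee - N} \<times> {N..t - int j * ee - N}" using x by auto
qed

lemma Sx_supp_fin:
  assumes "Rbd N X"
  shows "finite {(k,l). X$$l$$k * (phipow p k $ j)$$(t-l) \<noteq> 0}"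
  by (rule finite_subset[OF Sx_supp[OF assms]]) auto

lemma Sx_zero_below:
  assumes "Rbd N X" "t < 2*N + int j * ee"
  shows "(\<Sum>(k,l). X$$l$$k * (phipow p k $ j)$$(t-l)) = 0"
proof -
  have "{(k,l). X$$l$$k * (phipow p k $ j)$$(t-l) \<noteq> 0} = {}"
    using Sx_supp[OF assms(1), of j t] assms(2) by force
  then have "(\<lambda>(k,l). X$$l$$k * (phipow p k $ j)$$(t-l)) = (\<lambda>_. 0)"
    by (auto simp: fun_eq_iff)
  then show ?thesis by simp
qed

lemma Sx_nth:
  assumes "Rbd N X"
  shows "Sx X $ j $$ t = (\<Sum>(k,l). X$$l$$k * (phipow p k $ j)$$(t-l))"
proof -
  have "Abs_fls (\<lambda>t. \<Sum>(k,l). X$$l$$k * (phipow p k $ j)$$(t-l)) $$ t = (\<Sum>(k,l). X$$l$$k * (phipow p k $ j)$$(t-l))"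
    by (rule nth_Abs_fls_ex_lower_bound, rule exI[of _ "2*N + int j * ee"]) (use Sx_zero_below[OF assms] in auto)
  then show ?thesis by (simp add: Sx_def)
qed

lemma Sx_below:
  assumes "Rbd N X" "t < 2*N + int j * ee"
  shows "Sx X $ j $$ t = 0"
  using Sx_nth[OF assms(1)] Sx_zero_below[OF assms] by simp

lemma Rbd_add: "Rbd N X \<Longrightarrow> Rbd N Y \<Longrightarrow> Rbd N (X + Y)"
  by (simp add: Rbd_def)

lemma Rbd_mono: "Rbd N X \<Longrightarrow> M \<le> N \<Longrightarrow> Rbd M X"
  by (auto simp: Rbd_def)

lemma Sx_add:
  assumes "Rbd N X" "Rbd N Y"
  shows "Sx (X + Y) = Sx X + Sx Y"
proof (rule fps_ext, rule fls_eqI)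
  fix j t
  have "Sx (X + Y) $ j $$ t = (\<Sum>(k,l). (X+Y)$$l$$k * (phipow p k $ j)$$(t-l))"
    by (rule Sx_nth[OF Rbd_add[OF assms]])
  also have "\<dots> = (\<Sum>x. (\<lambda>(k,l). X$$l$$k * (phipow p k $ j)$$(t-l)) x + (\<lambda>(k,l). Y$$l$$k * (phipow p k $ j)$$(t-l)) x)"
    by (rule Sum_any.cong) (auto simp: algebra_simps)
  also have "\<dots> = (\<Sum>(k,l). X$$l$$k * (phipow p k $ j)$$(t-l)) + (\<Sum>(k,l). Y$$l$$k * (phipow p k $ j)$$(t-l))"
    by (rule Sum_any.distrib) (use Sx_supp_fin[OF assms(1)] Sx_supp_fin[OF assms(2)] in \<open>auto simp: case_prod_unfold\<close>)
  also have "\<dots> = (Sx X + Sx Y) $ j $$ t"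
    using Sx_nth[OF assms(1)] Sx_nth[OF assms(2)] by simp
  finally show "Sx (X + Y) $ j $$ t = (Sx X + Sx Y) $ j $$ t" .
qed

definition cst :: "complex \<Rightarrow> complex fls fls" where
  "cst c = fls_const (fls_const c)"

lemma cst_mult_nth[simp]: "(cst c * X)$$l$$k = c * X$$l$$k"
  by (simp add: cst_def)

lemma Rbd_cst: "Rbd N X \<Longrightarrow> Rbd N (cst c * X)"
  by (simp add: Rbd_def)

lemma Sx_cst:
  assumes "Rbd N X"
  shows "Sx (cst c * X) = fps_const (fls_const c) * Sx X"
proof (rule fps_ext, rule fls_eqI)
  fix j t
  have "Sx (cst c * X) $ j $$ t = (\<Sum>(k,l). (cst c * X)$$l$$k * (phipow p k $ j)$$(t-l))"
    by (rule Sx_nth[OF Rbd_cst[OF assms]])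
  also have "\<dots> = (\<Sum>(k,l). c * (X$$l$$k * (phipow p k $ j)$$(t-l)))"
    by (rule Sum_any.cong) (simp only: case_prod_unfold cst_mult_nth mult.assoc)
  also have "\<dots> = c * (\<Sum>(k,l). X$$l$$k * (phipow p k $ j)$$(t-l))"
    by (subst Sum_any_right_distrib) (use Sx_supp_fin[OF assms] in \<open>auto simp: case_prod_unfold\<close>)
  also have "\<dots> = (fps_const (fls_const c) * Sx X) $ j $$ t"
    using Sx_nth[OF assms] by simp
  finally show "Sx (cst c * X) $ j $$ t = (fps_const (fls_const c) * Sx X) $ j $$ t" .
qed

end

lemma supp_finI: "finite A \<Longrightarrow> (\<And>x. f x \<noteq> 0 \<Longrightarrow> x \<in> A) \<Longrightarrow> finite {x. f x \<noteq> 0}"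
  by (rule finite_subset[of _ A]) auto

lemma Sum_any_cart:
  fixes g :: "'a \<Rightarrow> 'b \<Rightarrow> 'c::comm_monoid_add"
  assumes "finite A" "finite B" "\<And>a b. g a b \<noteq> 0 \<Longrightarrow> a \<in> A \<and> b \<in> B"
  shows "Sum_any (\<lambda>a. Sum_any (\<lambda>b. g a b)) = Sum_any (\<lambda>(a,b). g a b)"
  by (rule Sum_any.cartesian_product[of "A \<times> B"]) (use assms in auto)

lemma Sum_any_swap':
  fixes g :: "'a \<Rightarrow> 'b \<Rightarrow> 'c::comm_monoid_add"
  assumes "finite A" "finite B" "\<And>a b. g a b \<noteq> 0 \<Longrightarrow> a \<in> A \<and> b \<in> B"
  shows "Sum_any (\<lambda>a. Sum_any (\<lambda>b. g a b)) = Sum_any (\<lambda>b. Sum_any (\<lambda>a. g a b))"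
  by (rule Sum_any.swap[of "A \<times> B"]) (use assms in auto)

lemma Sum_any_sum:
  fixes g :: "'i \<Rightarrow> 'a \<Rightarrow> 'c::comm_monoid_add"
  assumes "finite I" "\<And>i. i \<in> I \<Longrightarrow> finite {x. g i x \<noteq> 0}"
  shows "(\<Sum>i\<in>I. Sum_any (g i)) = Sum_any (\<lambda>x. \<Sum>i\<in>I. g i x)"
  using assms
proof (induction I rule: finite_induct)
  case empty then show ?case by simp
next
  case (insert i F)
  have fin: "finite {x. (\<Sum>i\<in>F. g i x) \<noteq> 0}"
  proof (rule finite_subset[of _ "\<Union>i\<in>F. {x. g i x \<noteq> 0}"])
    show "{x. (\<Sum>i\<in>F. g i x) \<noteq> 0} \<subseteq> (\<Union>i\<in>F. {x. g i x \<noteq> 0})"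
      by (auto elim: sum.not_neutral_contains_not_neutral)
    show "finite (\<Union>i\<in>F. {x. g i x \<noteq> 0})" using insert by auto
  qed
  have "(\<Sum>i\<in>insert i F. Sum_any (g i)) = Sum_any (g i) + Sum_any (\<lambda>x. \<Sum>i\<in>F. g i x)"
    using insert by simp
  also have "\<dots> = Sum_any (\<lambda>x. g i x + (\<Sum>i\<in>F. g i x))"
    by (rule Sum_any.distrib[symmetric]) (use insert fin in auto)
  also have "\<dots> = Sum_any (\<lambda>x. \<Sum>i\<in>insert i F. g i x)"
    using insert by simp
  finally show ?case .
qed

lemma fls_nth_Sum_any:
  assumes "finite {x. g x \<noteq> 0}"
  shows "Sum_any g $$ n = Sum_any (\<lambda>x. g x $$ n)"
proof -
  have "Sum_any g = sum g {x. g x \<noteq> 0}" by (simp add: Sum_any.expand_set)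
  then have "Sum_any g $$ n = (\<Sum>x\<in>{x. g x \<noteq> 0}. g x $$ n)" by (simp add: fls_nth_sum)
  also have "\<dots> = Sum_any (\<lambda>x. g x $$ n)"
    by (rule Sum_any.expand_superset[symmetric]) (use assms in auto)
  finally show ?thesis .
qed


lemma Sum_any_cart22:
  fixes g :: "'a \<Rightarrow> 'b \<Rightarrow> 'c \<Rightarrow> 'd \<Rightarrow> 'e::comm_monoid_add"
  assumes A: "finite A" and B: "finite B" and nz: "\<And>a1 a2 b1 b2. g a1 a2 b1 b2 \<noteq> 0 \<Longrightarrow> (a1,a2) \<in> A \<and> (b1,b2) \<in> B"
  shows "Sum_any (\<lambda>(a1,a2). Sum_any (\<lambda>(b1,b2). g a1 a2 b1 b2)) = Sum_any (\<lambda>((a1,a2),(b1,b2)). g a1 a2 b1 b2)"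
proof -
  have "Sum_any (\<lambda>(a1,a2). Sum_any (\<lambda>(b1,b2). g a1 a2 b1 b2)) = Sum_any (\<lambda>a. Sum_any (\<lambda>b. g (fst a) (snd a) (fst b) (snd b)))"
    by (simp add: split_def)
  also have "\<dots> = Sum_any (\<lambda>(a,b). g (fst a) (snd a) (fst b) (snd b))"
  proof (rule Sum_any_cart[OF A B])
    fix a b assume "g (fst a) (snd a) (fst b) (snd b) \<noteq> 0"
    then show "a \<in> A \<and> b \<in> B" using nz[of "fst a" "snd a" "fst b" "snd b"] by simp
  qed
  also have "\<dots> = Sum_any (\<lambda>((a1,a2),(b1,b2)). g a1 a2 b1 b2)"
    by (simp add: split_def)
  finally show ?thesis .
qed

lemma Sum_any_swap_1_22:
  fixes g :: "'t \<Rightarrow> 'a \<Rightarrow> 'b \<Rightarrow> 'c \<Rightarrow> 'd \<Rightarrow> 'e::comm_monoid_add"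
  assumes A: "finite A" and B: "finite B" and nz: "\<And>t a1 a2 b1 b2. g t a1 a2 b1 b2 \<noteq> 0 \<Longrightarrow> t \<in> A \<and> ((a1,a2),(b1,b2)) \<in> B"
  shows "Sum_any (\<lambda>t. Sum_any (\<lambda>((a1,a2),(b1,b2)). g t a1 a2 b1 b2)) = Sum_any (\<lambda>((a1,a2),(b1,b2)). Sum_any (\<lambda>t. g t a1 a2 b1 b2))"
proof -
  have "Sum_any (\<lambda>t. Sum_any (\<lambda>((a1,a2),(b1,b2)). g t a1 a2 b1 b2)) =
        Sum_any (\<lambda>t. Sum_any (\<lambda>x. g t (fst (fst x)) (snd (fst x)) (fst (snd x)) (snd (snd x))))"
    by (simp add: split_def)
  also have "\<dots> = Sum_any (\<lambda>x. Sum_any (\<lambda>t. g t (fst (fst x)) (snd (fst x)) (fst (snd x)) (snd (snd x))))"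
  proof (rule Sum_any_swap'[OF A B])
    fix t x assume "g t (fst (fst x)) (snd (fst x)) (fst (snd x)) (snd (snd x)) \<noteq> 0"
    then show "t \<in> A \<and> x \<in> B" using nz[of t "fst (fst x)" "snd (fst x)" "fst (snd x)" "snd (snd x)"] by simp
  qed
  also have "\<dots> = Sum_any (\<lambda>((a1,a2),(b1,b2)). Sum_any (\<lambda>t. g t a1 a2 b1 b2))"
    by (simp add: split_def)
  finally show ?thesis .
qed

context phictx
begin

abbreviation cc :: "int \<Rightarrow> nat \<Rightarrow> int \<Rightarrow> complex" where
  "cc k j s \<equiv> (phipow p k $ j) $$ s"

lemma cc_nz: "cc k j s \<noteq> 0 \<Longrightarrow> k + int j * ee \<le> s"
  using phipow_below by (meson not_le)

lemma Rbd_nz: "Rbd N X \<Longrightarrow> X$$l$$k \<noteq> 0 \<Longrightarrow> N \<le> l \<and> N \<le> k"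
  using RbdD by (meson not_le)

lemma Rbd_row0: "Rbd N X \<Longrightarrow> l < N \<Longrightarrow> X$$l = 0"
  by (auto simp: fls_eq_iff RbdD)

lemma XY_nth:
  assumes X: "Rbd N X" and Y: "Rbd M Y"
  shows "(X*Y)$$L$$K = (\<Sum>(l,k). X$$l$$k * Y$$(L-l)$$(K-k))"
proof -
  have fin1: "finite {l. X$$l * Y$$(L-l) \<noteq> 0}"
  proof (rule supp_finI[of "{N..L-M}"])
    fix l assume "X$$l * Y$$(L-l) \<noteq> 0"
    then have "X$$l \<noteq> 0" "Y$$(L-l) \<noteq> 0" by auto
    then have "\<not> l < N" "\<not> L - l < M" using Rbd_row0[OF X] Rbd_row0[OF Y] by blast+
    then show "l \<in> {N..L-M}" by auto
  qed simp
  have "(X*Y)$$L$$K = (\<Sum>l. X$$l * Y$$(L-l))$$K" by (simp add: fls_mult_Sum_any)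
  also have "\<dots> = (\<Sum>l. (X$$l * Y$$(L-l))$$K)" by (rule fls_nth_Sum_any[OF fin1])
  also have "\<dots> = (\<Sum>l. \<Sum>k. X$$l$$k * Y$$(L-l)$$(K-k))" by (simp add: fls_mult_Sum_any)
  also have "\<dots> = (\<Sum>(l,k). X$$l$$k * Y$$(L-l)$$(K-k))"
  proof (rule Sum_any_cart[of "{N..L-M}" "{N..K-M}"])
    fix l k assume "X$$l$$k * Y$$(L-l)$$(K-k) \<noteq> 0"
    then have "X$$l$$k \<noteq> 0" "Y$$(L-l)$$(K-k) \<noteq> 0" by auto
    then show "l \<in> {N..L-M} \<and> k \<in> {N..K-M}"
      using Rbd_nz[OF X] Rbd_nz[OF Y] by fastforce
  qed auto
  finally show ?thesis .
qed

lemma Rbd_mult: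
  assumes X: "Rbd N X" and Y: "Rbd M Y"
  shows "Rbd (N+M) (X*Y)"
  unfolding Rbd_def
proof (intro allI impI)
  fix L K assume LK: "L < N + M \<or> K < N + M"
  have "(\<lambda>(l,k). X$$l$$k * Y$$(L-l)$$(K-k)) = (\<lambda>_. 0)"
  proof (rule ext, clarify)
    fix l k show "X$$l$$k * Y$$(L-l)$$(K-k) = 0"
    proof (rule ccontr)
      assume "X$$l$$k * Y$$(L-l)$$(K-k) \<noteq> 0"
      then have "X$$l$$k \<noteq> 0" "Y$$(L-l)$$(K-k) \<noteq> 0" by auto
      then show False using Rbd_nz[OF X] Rbd_nz[OF Y] LK by fastforce
    qed
  qed
  then show "(X*Y)$$L$$K = 0" using XY_nth[OF X Y] by simp
qed


lemma Sx_mult_L: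
  assumes X: "Rbd N X" and Y: "Rbd M Y"
  shows "Sx (X*Y) $ j $$ t = (\<Sum>((k,l),(k',l')). X$$l$$k * Y$$l'$$k' * cc (k+k') j (t-l-l'))"
proof -
  have XY: "Rbd (N+M) (X*Y)" by (rule Rbd_mult[OF X Y])
  define R0 where "R0 = t - int j * ee - N - M"
  have "Sx (X*Y) $ j $$ t = (\<Sum>(K,L). (X*Y)$$L$$K * cc K j (t-L))" by (rule Sx_nth[OF XY])
  also have "\<dots> = (\<Sum>(K,L). (\<Sum>(l,k). X$$l$$k * Y$$(L-l)$$(K-k)) * cc K j (t-L))"
    by (simp only: XY_nth[OF X Y])
  also have "\<dots> = (\<Sum>(K,L). \<Sum>(l,k). X$$l$$k * Y$$(L-l)$$(K-k) * cc K j (t-L))"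
  proof (rule Sum_any.cong, clarify)
    fix K L
    have fin: "finite {x. (\<lambda>(l,k). X$$l$$k * Y$$(L-l)$$(K-k)) x \<noteq> 0}"
    proof (rule supp_finI[where A = "{N..L-M} \<times> {N..K-M}"])
      fix x assume "(\<lambda>(l,k). X$$l$$k * Y$$(L-l)$$(K-k)) x \<noteq> 0"
      moreover obtain l k where x: "x = (l,k)" by (cases x)
      ultimately have "X$$l$$k \<noteq> 0" "Y$$(L-l)$$(K-k) \<noteq> 0" by auto
      then show "x \<in> {N..L-M} \<times> {N..K-M}" using Rbd_nz[OF X] Rbd_nz[OF Y] x by fastforce
    qed simp
    show "(\<Sum>(l,k). X$$l$$k * Y$$(L-l)$$(K-k)) * cc K j (t-L) = (\<Sum>(l,k). X$$l$$k * Y$$(L-l)$$(K-k) * cc K j (t-L))"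
      by (subst Sum_any_left_distrib[OF fin]) (simp add: case_prod_unfold)
  qed
  also have "\<dots> = (\<Sum>((K,L),(l,k)). X$$l$$k * Y$$(L-l)$$(K-k) * cc K j (t-L))"
  proof (rule Sum_any_cart22[of "{N+M..R0} \<times> {N+M..R0}" "{N..R0-M} \<times> {N..R0-M}"])
    fix K L l k
    assume nz: "X$$l$$k * Y$$(L-l)$$(K-k) * cc K j (t-L) \<noteq> 0"
    then have "X$$l$$k \<noteq> 0" "Y$$(L-l)$$(K-k) \<noteq> 0" "cc K j (t-L) \<noteq> 0" by auto
    then have "N \<le> l" "N \<le> k" "M \<le> L - l" "M \<le> K - k" "K + int j * ee \<le> t - L"
      using Rbd_nz[OF X] Rbd_nz[OF Y] cc_nz by blast+
    then show "(K,L) \<in> {N+M..R0} \<times> {N+M..R0} \<and> (l,k) \<in> {N..R0-M} \<times> {N..R0-M}"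
      unfolding R0_def by auto
  qed auto
  also have "\<dots> = (\<Sum>((k,l),(k',l')). X$$l$$k * Y$$l'$$k' * cc (k+k') j (t-l-l'))"
  proof (rule Sum_any.reindex_cong[of "\<lambda>((k,l),(k',l')). ((k+k', l+l'), (l,k))"])
    show "bij (\<lambda>((k::int,l::int),(k'::int,l'::int)). ((k+k', l+l'), (l,k)))"
    proof (rule o_bij[of "\<lambda>((K,L),(l,k)). ((k,l),(K-k,L-l))"])
      show "(\<lambda>((K::int,L::int),(l::int,k::int)). ((k,l),(K-k,L-l))) \<circ> (\<lambda>((k,l),(k',l')). ((k+k', l+l'), (l,k))) = id"
        by (auto simp: fun_eq_iff)
      show "(\<lambda>((k::int,l::int),(k'::int,l'::int)). ((k+k', l+l'), (l,k))) \<circ> (\<lambda>((K,L),(l,k)). ((k,l),(K-k,L-l))) = id"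
        by (auto simp: fun_eq_iff)
    qed
    show "(\<lambda>((K,L),(l,k)). X$$l$$k * Y$$(L-l)$$(K-k) * cc K j (t-L)) \<circ>
           (\<lambda>((k,l),(k',l')). ((k+k', l+l'), (l,k))) =
          (\<lambda>((k,l),(k',l')). X$$l$$k * Y$$l'$$k' * cc (k+k') j (t-l-l'))"
      by (auto simp: fun_eq_iff algebra_simps)
  qed
  finally show ?thesis .
qed


lemma Sx_mult_Ri:
  assumes X: "Rbd N X" and Y: "Rbd M Y" and ij: "i \<le> j"
  shows "(Sx X $ i * Sx Y $ (j-i)) $$ t =
    (\<Sum>((k,l),(k',l')). X$$l$$k * Y$$l'$$k' * (phipow p k $ i * phipow p k' $ (j-i))$$(t-l-l'))"
proof -
  define a where "a = int i * ee"
  define b where "b = int (j-i) * ee"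
  have ab: "a + b = int j * ee" using ij by (simp add: a_def b_def of_nat_diff algebra_simps)
  define g where "g t1 k l k' l' = (X$$l$$k * cc k i (t1-l)) * (Y$$l'$$k' * cc k' (j-i) (t-t1-l'))" for t1 k l k' l'
  have gnz: "N \<le> k \<and> N \<le> l \<and> M \<le> k' \<and> M \<le> l' \<and> k + a \<le> t1 - l \<and> k' + b \<le> t - t1 - l'"
    if "g t1 k l k' l' \<noteq> 0" for t1 k l k' l'
  proof -
    from that have "X$$l$$k \<noteq> 0" "cc k i (t1-l) \<noteq> 0" "Y$$l'$$k' \<noteq> 0" "cc k' (j-i) (t-t1-l') \<noteq> 0"
      by (auto simp: g_def)
    then show ?thesis using Rbd_nz[OF X] Rbd_nz[OF Y] cc_nz unfolding a_def b_def by blast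
  qed
  have "(Sx X $ i * Sx Y $ (j-i)) $$ t = (\<Sum>t1. Sx X $ i $$ t1 * Sx Y $ (j-i) $$ (t-t1))"
    by (rule fls_mult_Sum_any)
  also have "\<dots> = (\<Sum>t1. (\<Sum>(k,l). X$$l$$k * cc k i (t1-l)) * (\<Sum>(k',l'). Y$$l'$$k' * cc k' (j-i) (t-t1-l')))"
    by (simp only: Sx_nth[OF X] Sx_nth[OF Y])
  also have "\<dots> = (\<Sum>t1. \<Sum>(k,l). \<Sum>(k',l'). g t1 k l k' l')"
  proof (rule Sum_any.cong)
    fix t1
    have "(\<Sum>(k,l). X$$l$$k * cc k i (t1-l)) * (\<Sum>(k',l'). Y$$l'$$k' * cc k' (j-i) (t-t1-l')) =
      (\<Sum>x. \<Sum>y. (\<lambda>(k,l). X$$l$$k * cc k i (t1-l)) x * (\<lambda>(k',l'). Y$$l'$$k' * cc k' (j-i) (t-t1-l')) y)"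
      by (rule Sum_any_product) (use Sx_supp_fin[OF X] Sx_supp_fin[OF Y] in \<open>auto simp: case_prod_unfold\<close>)
    then show "(\<Sum>(k,l). X$$l$$k * cc k i (t1-l)) * (\<Sum>(k',l'). Y$$l'$$k' * cc k' (j-i) (t-t1-l')) =
      (\<Sum>(k,l). \<Sum>(k',l'). g t1 k l k' l')"
      by (simp add: g_def case_prod_unfold)
  qed
  also have "\<dots> = (\<Sum>t1. \<Sum>((k,l),(k',l')). g t1 k l k' l')"
  proof (rule Sum_any.cong)
    fix t1
    show "(\<Sum>(k,l). \<Sum>(k',l'). g t1 k l k' l') = (\<Sum>((k,l),(k',l')). g t1 k l k' l')"
    proof (rule Sum_any_cart22[of "{N..t1 - a - N} \<times> {N..t1 - a - N}" "{M..t - t1 - b - M} \<times> {M..t - t1 - b - M}"])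
      fix k l k' l' assume "g t1 k l k' l' \<noteq> 0"
      then have "N \<le> k \<and> N \<le> l \<and> M \<le> k' \<and> M \<le> l' \<and> k + a \<le> t1 - l \<and> k' + b \<le> t - t1 - l'" by (rule gnz)
      then show "(k,l) \<in> {N..t1 - a - N} \<times> {N..t1 - a - N} \<and> (k',l') \<in> {M..t - t1 - b - M} \<times> {M..t - t1 - b - M}"
        by auto
    qed auto
  qed
  also have "\<dots> = (\<Sum>((k,l),(k',l')). \<Sum>t1. g t1 k l k' l')"
  proof (rule Sum_any_swap_1_22[of "{2*N + a..t - 2*M - b}"
      "({N..t - 2*M - a - b - N} \<times> {N..t - 2*M - a - b - N}) \<times> ({M..t - 2*N - a - b - M} \<times> {M..t - 2*N - a - b - M})"])
    fix t1 k l k' l' assume "g t1 k l k' l' \<noteq> 0"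
    then have "N \<le> k \<and> N \<le> l \<and> M \<le> k' \<and> M \<le> l' \<and> k + a \<le> t1 - l \<and> k' + b \<le> t - t1 - l'" by (rule gnz)
    then show "t1 \<in> {2*N + a..t - 2*M - b} \<and> ((k,l),(k',l')) \<in>
      ({N..t - 2*M - a - b - N} \<times> {N..t - 2*M - a - b - N}) \<times> ({M..t - 2*N - a - b - M} \<times> {M..t - 2*N - a - b - M})"
      by auto
  qed auto
  also have "\<dots> = (\<Sum>((k,l),(k',l')). X$$l$$k * Y$$l'$$k' * (phipow p k $ i * phipow p k' $ (j-i))$$(t-l-l'))"
  proof (rule Sum_any.cong, clarify)
    fix k l k' l'
    have fin: "finite {t1. cc k i (t1-l) * cc k' (j-i) (t-t1-l') \<noteq> 0}"
    proof (rule supp_finI[where A = "{k + a + l..t - l' - k' - b}"])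
      fix t1 assume "cc k i (t1-l) * cc k' (j-i) (t-t1-l') \<noteq> 0"
      then have "cc k i (t1-l) \<noteq> 0" "cc k' (j-i) (t-t1-l') \<noteq> 0" by auto
      then have "k + a \<le> t1 - l" "k' + b \<le> t - t1 - l'" using cc_nz unfolding a_def b_def by blast+
      then show "t1 \<in> {k + a + l..t - l' - k' - b}" by auto
    qed simp
    have "(\<Sum>t1. g t1 k l k' l') = (\<Sum>t1. (X$$l$$k * Y$$l'$$k') * (cc k i (t1-l) * cc k' (j-i) (t-t1-l')))"
      by (simp add: g_def algebra_simps)
    also have "\<dots> = (X$$l$$k * Y$$l'$$k') * (\<Sum>t1. cc k i (t1-l) * cc k' (j-i) (t-t1-l'))"
      by (rule Sum_any_right_distrib[OF fin, symmetric])
    also have "(\<Sum>t1. cc k i (t1-l) * cc k' (j-i) (t-t1-l')) = (\<Sum>s. cc k i s * cc k' (j-i) (t-l-l'-s))"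
    proof (rule Sum_any.reindex_cong[of "\<lambda>s. s + l"])
      show "bij (\<lambda>s::int. s + l)" by (rule o_bij[of "\<lambda>s. s - l"]) (auto simp: fun_eq_iff)
      show "(\<lambda>t1. cc k i (t1-l) * cc k' (j-i) (t-t1-l')) \<circ> (\<lambda>s. s + l) = (\<lambda>s. cc k i s * cc k' (j-i) (t-l-l'-s))"
        by (auto simp: fun_eq_iff algebra_simps)
    qed
    also have "\<dots> = (phipow p k $ i * phipow p k' $ (j-i))$$(t-l-l')"
      by (rule fls_mult_Sum_any[symmetric])
    finally show "(\<Sum>t1. g t1 k l k' l') = X$$l$$k * Y$$l'$$k' * (phipow p k $ i * phipow p k' $ (j-i))$$(t-l-l')"
      by simp
  qed
  finally show ?thesis .
qed

lemma Sx_mult: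
  assumes X: "Rbd N X" and Y: "Rbd M Y"
  shows "Sx (X*Y) = Sx X * Sx Y"
proof (rule fps_ext, rule fls_eqI)
  fix j t
  have "(Sx X * Sx Y) $ j $$ t = (\<Sum>i=0..j. (Sx X $ i * Sx Y $ (j-i)) $$ t)"
    by (simp add: fps_mult_nth fls_nth_sum)
  also have "\<dots> = (\<Sum>i=0..j. \<Sum>((k,l),(k',l')). X$$l$$k * Y$$l'$$k' * (phipow p k $ i * phipow p k' $ (j-i))$$(t-l-l'))"
    by (rule sum.cong[OF refl]) (simp add: Sx_mult_Ri[OF X Y])
  also have "\<dots> = (\<Sum>((k,l),(k',l')). \<Sum>i=0..j. X$$l$$k * Y$$l'$$k' * (phipow p k $ i * phipow p k' $ (j-i))$$(t-l-l'))"
  proof -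
    have "(\<Sum>i=0..j. Sum_any (\<lambda>((k,l),(k',l')). X$$l$$k * Y$$l'$$k' * (phipow p k $ i * phipow p k' $ (j-i))$$(t-l-l'))) =
      Sum_any (\<lambda>x. \<Sum>i=0..j. (\<lambda>((k,l),(k',l')). X$$l$$k * Y$$l'$$k' * (phipow p k $ i * phipow p k' $ (j-i))$$(t-l-l')) x)"
    proof (rule Sum_any_sum)
      fix i assume i: "i \<in> {0..j}"
      define a where "a = int i * ee"
      define b where "b = int (j-i) * ee"
      have ab: "a + b = int j * ee" using i by (simp add: a_def b_def of_nat_diff algebra_simps)
      define R where "R = t - int j * ee"
      show "finite {x. (\<lambda>((k,l),(k',l')). X$$l$$k * Y$$l'$$k' * (phipow p k $ i * phipow p k' $ (j-i))$$(t-l-l')) x \<noteq> 0}"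
      proof (rule supp_finI[where A = "({N..R - 2*M - N} \<times> {N..R - 2*M - N}) \<times> ({M..R - 2*N - M} \<times> {M..R - 2*N - M})"])
        fix x assume nz: "(\<lambda>((k,l),(k',l')). X$$l$$k * Y$$l'$$k' * (phipow p k $ i * phipow p k' $ (j-i))$$(t-l-l')) x \<noteq> 0"
        obtain k l k' l' where x: "x = ((k,l),(k',l'))" by (metis prod.collapse)
        from nz have "X$$l$$k \<noteq> 0" "Y$$l'$$k' \<noteq> 0" "(phipow p k $ i * phipow p k' $ (j-i))$$(t-l-l') \<noteq> 0"
          by (auto simp: x)
        moreover have "k + a + (k' + b) \<le> t - l - l'"
        proof (rule ccontr)
          assume "\<not> k + a + (k' + b) \<le> t - l - l'"
          then have "(phipow p k $ i * phipow p k' $ (j-i))$$(t-l-l') = 0"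
            by (intro fls_zero_below_mult[where A = "k + a" and B = "k' + b"])
               (auto simp: a_def b_def intro: phipow_below)
          then show False using calculation by simp
        qed
        ultimately show "x \<in> ({N..R - 2*M - N} \<times> {N..R - 2*M - N}) \<times> ({M..R - 2*N - M} \<times> {M..R - 2*N - M})"
          using Rbd_nz[OF X] Rbd_nz[OF Y] ab unfolding x R_def by fastforce
      qed simp
    qed simp
    then show ?thesis by (simp add: case_prod_unfold)
  qed
  also have "\<dots> = (\<Sum>((k,l),(k',l')). X$$l$$k * Y$$l'$$k' * cc (k+k') j (t-l-l'))"
  proof (rule Sum_any.cong, clarify)
    fix k l k' l'
    have "(\<Sum>i=0..j. (phipow p k $ i * phipow p k' $ (j-i))$$(t-l-l')) = ((phipow p k * phipow p k') $ j)$$(t-l-l')"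
      by (simp add: fps_mult_nth fls_nth_sum)
    also have "\<dots> = cc (k+k') j (t-l-l')" by (simp add: phipow_add)
    finally show "(\<Sum>i=0..j. X$$l$$k * Y$$l'$$k' * (phipow p k $ i * phipow p k' $ (j-i))$$(t-l-l')) =
      X$$l$$k * Y$$l'$$k' * cc (k+k') j (t-l-l')"
      by (simp add: sum_distrib_left[symmetric])
  qed
  also have "\<dots> = Sx (X*Y) $ j $$ t" by (rule Sx_mult_L[OF X Y, symmetric])
  finally show "Sx (X*Y) $ j $$ t = (Sx X * Sx Y) $ j $$ t" by simp
qed

end

definition EF :: "(int \<Rightarrow> int \<Rightarrow> complex) \<Rightarrow> complex fls fls" where
  "EF F = Abs_fls (\<lambda>d. Abs_fls (\<lambda>c. F c d))"

lemma Abs_fls_zero: "Abs_fls (\<lambda>_. 0) = 0"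
proof (rule fls_eqI)
  fix n show "Abs_fls (\<lambda>_. 0) $$ n = (0::'a::zero fls) $$ n"
    by (subst nth_Abs_fls_ex_lower_bound) (auto intro: exI[of _ 0])
qed

lemma EF_nth:
  assumes "laurent2 F"
  shows "EF F $$ d $$ c = F c d"
proof -
  obtain N where N: "\<forall>a b. (a < N \<or> b < N) \<longrightarrow> F a b = 0" using assms by (auto simp: laurent2_def)
  have inner: "Abs_fls (\<lambda>c. F c d) $$ c = F c d" for d c
    by (rule nth_Abs_fls_ex_lower_bound, rule exI[of _ N]) (use N in auto)
  have z: "Abs_fls (\<lambda>c. F c d) = 0" if "d < N" for d
    using N that by (auto simp: fls_eq_iff inner)
  have "EF F $$ d = Abs_fls (\<lambda>c. F c d)"
    unfolding EF_def by (rule nth_Abs_fls_ex_lower_bound, rule exI[of _ N]) (use z in auto)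
  then show ?thesis by (simp add: inner)
qed

context phictx
begin

lemma Rbd_EF:
  assumes "\<forall>a b. (a < N \<or> b < N) \<longrightarrow> F a b = 0"
  shows "Rbd N (EF F)"
proof -
  have "laurent2 F" using assms by (auto simp: laurent2_def)
  then show ?thesis using assms by (auto simp: Rbd_def EF_nth)
qed

lemma laurent2_Rbd: "laurent2 F \<Longrightarrow> \<exists>N. Rbd N (EF F)"
  unfolding laurent2_def using Rbd_EF by blast

lemma Sx_EF_nz:
  assumes L: "laurent2 F" and nzF: "F \<noteq> (\<lambda>a b. 0)"
  shows "Sx (EF F) \<noteq> 0"
proof
  assume z: "Sx (EF F) = 0"
  obtain N where N: "\<forall>a b. (a < N \<or> b < N) \<longrightarrow> F a b = 0" using L by (auto simp: laurent2_def)
  have R: "Rbd N (EF F)" by (rule Rbd_EF[OF N])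
  have "\<exists>k l. F k l \<noteq> 0"
  proof (rule ccontr)
    assume "\<not> (\<exists>k l. F k l \<noteq> 0)"
    then have "F = (\<lambda>a b. 0)" by (auto intro!: ext)
    then show False using nzF by simp
  qed
  then obtain k1 l1 where kl1: "F k1 l1 \<noteq> 0" by blast
  have ge: "2*N \<le> k + l" if "F k l \<noteq> 0" for k l
  proof -
    have "\<not> k < N" "\<not> l < N" using N that by blast+
    then show ?thesis by linarith
  qed
  define S where "S = {n::nat. \<exists>k l. F k l \<noteq> 0 \<and> k + l = 2*N + int n}"
  have "nat (k1 + l1 - 2*N) \<in> S" using kl1 ge[OF kl1] unfolding S_def by (intro CollectI exI[of _ k1] exI[of _ l1]) auto
  then have n0S: "(LEAST n. n \<in> S) \<in> S" by (rule LeastI)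
  define s0 where "s0 = 2*N + int (LEAST n. n \<in> S)"
  obtain k0 l0 where kl0: "F k0 l0 \<noteq> 0" "k0 + l0 = s0" using n0S unfolding S_def s0_def by auto
  have mn: "s0 \<le> k + l" if "F k l \<noteq> 0" for k l
  proof -
    have "nat (k + l - 2*N) \<in> S" using that ge[OF that] unfolding S_def by (intro CollectI exI[of _ k] exI[of _ l]) auto
    then have "(LEAST n. n \<in> S) \<le> nat (k + l - 2*N)" by (rule Least_le)
    then show ?thesis using ge[OF that] unfolding s0_def by linarith
  qed
  define Kset where "Kset = {N..s0-N}"
  define P where "P = (\<Sum>k\<in>Kset. fps_const (F k (s0-k)) * ipow psi k)"
  have "P $ j = 0" for j
  proof -
    have "0 = Sx (EF F) $ j $$ (s0 + int j * ee)" using z by simp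
    also have "\<dots> = (\<Sum>(k,l). EF F $$ l $$ k * cc k j (s0 + int j * ee - l))" by (rule Sx_nth[OF R])
    also have "\<dots> = (\<Sum>(k,l). if l = s0 - k then F k (s0 - k) * (ipow psi k $ j) else 0)"
    proof (rule Sum_any.cong, clarify)
      fix k l
      show "EF F $$ l $$ k * cc k j (s0 + int j * ee - l) = (if l = s0 - k then F k (s0 - k) * (ipow psi k $ j) else 0)"
      proof (cases "l = s0 - k")
        case True
        then have e: "s0 + int j * ee - l = k + int j * ee" by simp
        have "EF F $$ l $$ k * cc k j (s0 + int j * ee - l) = F k l * (ipow psi k $ j)"
          by (simp only: e EF_nth[OF L] phipow_lead)
        then show ?thesis using True by simp
      next
        case False
        show ?thesis
        proof (cases "F k l = 0")
          case True then show ?thesis using False by (simp add: EF_nth[OF L])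
        next
          case nz: False
          have "s0 + int j * ee - l < k + int j * ee" using mn[OF nz] False by simp
          then have "cc k j (s0 + int j * ee - l) = 0" by (rule phipow_below)
          then show ?thesis using False by simp
        qed
      qed
    qed
    also have "\<dots> = Sum_any (\<lambda>k. Sum_any (\<lambda>l. if l = s0 - k then F k (s0 - k) * (ipow psi k $ j) else 0))"
    proof (rule Sum_any_cart[symmetric, of Kset Kset])
      fix k l assume "(if l = s0 - k then F k (s0 - k) * (ipow psi k $ j) else 0) \<noteq> 0"
      then have "l = s0 - k" "F k (s0-k) \<noteq> 0" by (auto split: if_splits)
      then have "\<not> k < N" "\<not> s0 - k < N" using N by blast+
      then show "k \<in> Kset \<and> l \<in> Kset" using \<open>l = s0 - k\<close> unfolding Kset_def by auto
    qed (auto simp: Kset_def)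
    also have "\<dots> = Sum_any (\<lambda>k. F k (s0 - k) * (ipow psi k $ j))"
      by (rule Sum_any.cong) (simp add: eq_commute[of _ "s0 - _"])
    also have "\<dots> = (\<Sum>k\<in>Kset. F k (s0 - k) * (ipow psi k $ j))"
    proof (rule Sum_any.expand_superset)
      show "{a. F a (s0 - a) * (ipow psi a $ j) \<noteq> 0} \<subseteq> Kset"
      proof
        fix a assume "a \<in> {a. F a (s0 - a) * (ipow psi a $ j) \<noteq> 0}"
        then have "F a (s0 - a) \<noteq> 0" by auto
        then have "\<not> a < N" "\<not> s0 - a < N" using N by blast+
        then show "a \<in> Kset" unfolding Kset_def by auto
      qed
    qed (simp add: Kset_def)
    also have "\<dots> = P $ j" by (simp add: P_def fps_sum_nth)
    finally show ?thesis by simp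
  qed
  then have "P = 0" by (simp add: fps_ext)
  then have "\<forall>k\<in>Kset. F k (s0 - k) = 0"
    using fps_nonvanish_int[OF psi_0 psi_1, of Kset] unfolding P_def Kset_def by simp
  moreover have "k0 \<in> Kset"
  proof -
    have "\<not> k0 < N" "\<not> l0 < N" using N kl0(1) by blast+
    then show ?thesis using kl0(2) unfolding Kset_def by auto
  qed
  moreover have "l0 = s0 - k0" using kl0(2) by simp
  ultimately show False using kl0(1) by simp
qed

end

lemma fls2_mult_nth:
  fixes X Y :: "'a::comm_ring_1 fls fls"
  shows "(X*Y)$$L$$K = (\<Sum>(l,k). X$$l$$k * Y$$(L-l)$$(K-k))"
proof -
  define A where "A = {fls_subdegree X..L - fls_subdegree Y}"
  have fin1: "finite {l. X$$l * Y$$(L-l) \<noteq> 0}"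
  proof (rule supp_finI[where A = A])
    fix l assume "X$$l * Y$$(L-l) \<noteq> 0"
    then have "X$$l \<noteq> 0" "Y$$(L-l) \<noteq> 0" by auto
    then show "l \<in> A" unfolding A_def using fls_subdegree_leI by fastforce
  qed (simp add: A_def)
  have "(X*Y)$$L$$K = Sum_any (\<lambda>l. X$$l * Y$$(L-l))$$K" by (simp add: fls_mult_Sum_any)
  also have "\<dots> = Sum_any (\<lambda>l. (X$$l * Y$$(L-l))$$K)" by (rule fls_nth_Sum_any[OF fin1])
  also have "\<dots> = Sum_any (\<lambda>l. Sum_any (\<lambda>k. X$$l$$k * Y$$(L-l)$$(K-k)))" by (simp add: fls_mult_Sum_any)
  also have "\<dots> = (\<Sum>(l,k). X$$l$$k * Y$$(L-l)$$(K-k))"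
  proof (rule Sum_any_cart[of A "\<Union>l\<in>A. {fls_subdegree (X$$l)..K - fls_subdegree (Y$$(L-l))}"])
    fix l k assume "X$$l$$k * Y$$(L-l)$$(K-k) \<noteq> 0"
    then have nz: "X$$l$$k \<noteq> 0" "Y$$(L-l)$$(K-k) \<noteq> 0" by auto
    then have "X$$l \<noteq> 0" "Y$$(L-l) \<noteq> 0" by auto
    then have lA: "l \<in> A" unfolding A_def using fls_subdegree_leI by fastforce
    have "k \<in> {fls_subdegree (X$$l)..K - fls_subdegree (Y$$(L-l))}"
      using nz fls_subdegree_leI by fastforce
    then show "l \<in> A \<and> k \<in> (\<Union>l\<in>A. {fls_subdegree (X$$l)..K - fls_subdegree (Y$$(L-l))})"
      using lA by blast
  qed (auto simp: A_def)
  finally show ?thesis .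
qed

locale ctx = cvs scale + phictx p
  for scale :: "complex \<Rightarrow> 'v::ab_group_add \<Rightarrow> 'v" and p
begin

definition lin :: "('v \<Rightarrow> complex) \<Rightarrow> bool" where
  "lin L \<longleftrightarrow> (\<forall>u v. L (u+v) = L u + L v) \<and> (\<forall>c u. L (scale c u) = c * L u)"

lemma lin_add: "lin L \<Longrightarrow> L (u+v) = L u + L v" by (simp add: lin_def)
lemma lin_scale: "lin L \<Longrightarrow> L (scale c u) = c * L u" by (simp add: lin_def)
lemma lin_0: "lin L \<Longrightarrow> L 0 = 0"
  using lin_add[of L 0 0] by simp
lemma lin_diff: "lin L \<Longrightarrow> L (u - v) = L u - L v"
  using lin_add[of L "u - v" v] by simp
lemma lin_sum: "lin L \<Longrightarrow> L (sum f A) = (\<Sum>x\<in>A. L (f x))"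
  by (induction A rule: infinite_finite_induct) (auto simp: lin_0 lin_add)

lemma eq_by_lin:
  assumes "\<And>L. lin L \<Longrightarrow> L x = L y"
  shows "x = y"
proof (rule ccontr)
  assume "x \<noteq> y"
  then have "x - y \<noteq> 0" by simp
  then obtain L where "lin L" "L (x - y) \<noteq> 0"
    using separating_functional unfolding lin_def by blast
  moreover have "L (x - y) = L x - L y" by (rule lin_diff[OF \<open>lin L\<close>])
  ultimately show False using assms[of L] by simp
qed

lemma Sum_any_lin:
  assumes fin: "finite {x. scale (c x) (v x) \<noteq> 0}" and L: "lin L"
  shows "L (Sum_any (\<lambda>x. scale (c x) (v x))) = Sum_any (\<lambda>x. c x * L (v x))"
proof -
  define S where "S = {x. scale (c x) (v x) \<noteq> 0}"
  have "L (Sum_any (\<lambda>x. scale (c x) (v x))) = L (\<Sum>x\<in>S. scale (c x) (v x))"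
    by (simp add: Sum_any.expand_set S_def)
  also have "\<dots> = (\<Sum>x\<in>S. c x * L (v x))" by (simp add: lin_sum[OF L] lin_scale[OF L])
  also have "\<dots> = Sum_any (\<lambda>x. c x * L (v x))"
    by (rule Sum_any.expand_superset[symmetric]) (use fin lin_0[OF L] in \<open>auto simp: S_def\<close>)
  finally show ?thesis .
qed

lemma fab_Sum_any:
  "fab scale F a b k l w i = (\<Sum>(c,d). scale (F c d) (a (k-c) (b (l-d) w) i))"
  unfolding fab_def Sum_any.expand_set
  by (rule sum.cong) (auto simp: case_prod_unfold)

lemma fab_fin:
  assumes a: "a \<in> Eh scale" and b: "b \<in> Eh scale" and F: "laurent2 F"
  shows "finite {x. (\<lambda>(c,d). scale (F c d) (a (k-c) (b (l-d) w) i)) x \<noteq> 0}"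
proof -
  obtain NF where NF: "\<forall>c d. (c < NF \<or> d < NF) \<longrightarrow> F c d = 0" using F by (auto simp: laurent2_def)
  obtain Nb where Nb: "\<forall>m<Nb. \<forall>i'<Suc i. b m w i' = 0" using Eh_trunc[OF b] by blast
  define Nd where "Nd d = (SOME N. \<forall>m<N. \<forall>i'<Suc i. a m (b (l-d) w) i' = 0)" for d
  have Nd: "\<forall>m<Nd d. \<forall>i'<Suc i. a m (b (l-d) w) i' = 0" for d
    unfolding Nd_def by (rule someI_ex) (rule Eh_trunc[OF a])
  define D where "D = {NF..l - Nb}"
  show ?thesis
  proof (rule supp_finI[where A = "\<Union>d\<in>D. {NF..k - Nd d} \<times> {d}"])
    fix x assume nz: "(\<lambda>(c,d). scale (F c d) (a (k-c) (b (l-d) w) i)) x \<noteq> 0"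
    obtain c d where x: "x = (c,d)" by (cases x)
    from nz have F0: "F c d \<noteq> 0" and A0: "a (k-c) (b (l-d) w) i \<noteq> 0" by (auto simp: x)
    have "NF \<le> c" "NF \<le> d" using NF F0 by (auto simp: not_less[symmetric])
    moreover have "\<not> l - d < Nb"
    proof
      assume "l - d < Nb"
      then have "\<forall>j\<le>i. b (l-d) w j = 0" using Nb by auto
      then have "a (k-c) (b (l-d) w) i = 0" by (rule hlinear_comp_zero[OF Eh_hlinear[OF a]])
      then show False using A0 by simp
    qed
    moreover have "\<not> k - c < Nd d" using Nd[of d] A0 by auto
    ultimately show "x \<in> (\<Union>d\<in>D. {NF..k - Nd d} \<times> {d})" unfolding x D_def by auto
  qed (simp add: D_def)
qed

definition DL :: "('v \<Rightarrow> complex) \<Rightarrow> 'v hser \<Rightarrow> 'v hser \<Rightarrow> 'v hmod \<Rightarrow> nat \<Rightarrow> complex fls fls" where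
  "DL L a b w i = Abs_fls (\<lambda>l'. Abs_fls (\<lambda>k'. L (a k' (b l' w) i)))"

lemma DL_nth:
  assumes a: "a \<in> Eh scale" and b: "b \<in> Eh scale" and L: "lin L"
  shows "DL L a b w i $$ l' $$ k' = L (a k' (b l' w) i)"
proof -
  have inner: "Abs_fls (\<lambda>k'. L (a k' (b l' w) i)) $$ k' = L (a k' (b l' w) i)" for l' k'
  proof -
    obtain N where N: "\<forall>m<N. \<forall>i'<Suc i. a m (b l' w) i' = 0" using Eh_trunc[OF a] by blast
    show ?thesis by (rule nth_Abs_fls_ex_lower_bound, rule exI[of _ N]) (use N lin_0[OF L] in auto)
  qed
  obtain Nb where Nb: "\<forall>m<Nb. \<forall>i'<Suc i. b m w i' = 0" using Eh_trunc[OF b] by blast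
  have z: "Abs_fls (\<lambda>k'. L (a k' (b l' w) i)) = 0" if "l' < Nb" for l'
  proof -
    have "\<forall>j\<le>i. b l' w j = 0" using Nb that by auto
    then have "a k' (b l' w) i = 0" for k' by (rule hlinear_comp_zero[OF Eh_hlinear[OF a]])
    then show ?thesis by (simp add: lin_0[OF L] Abs_fls_zero)
  qed
  have "DL L a b w i $$ l' = Abs_fls (\<lambda>k'. L (a k' (b l' w) i))"
    unfolding DL_def by (rule nth_Abs_fls_ex_lower_bound, rule exI[of _ Nb]) (use z in auto)
  then show ?thesis by (simp add: inner)
qed

lemma L_fab:
  assumes a: "a \<in> Eh scale" and b: "b \<in> Eh scale" and F: "laurent2 F" and L: "lin L"
  shows "L (fab scale F a b k l w i) = (EF F * DL L a b w i)$$l$$k"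
proof -
  have "L (fab scale F a b k l w i) = (\<Sum>(c,d). F c d * L (a (k-c) (b (l-d) w) i))"
    unfolding fab_Sum_any
    using Sum_any_lin[OF _ L, where c = "\<lambda>(c,d). F c d" and v = "\<lambda>(c,d). a (k-c) (b (l-d) w) i"]
      fab_fin[OF a b F, of k l w i]
    by (simp add: case_prod_unfold)
  also have "\<dots> = (\<Sum>(d,c). EF F $$ d $$ c * DL L a b w i $$ (l-d) $$ (k-c))"
  proof (rule Sum_any.reindex_cong[of "\<lambda>(d,c). (c,d)"])
    show "bij (\<lambda>(d::int,c::int). (c,d))" by (rule o_bij[of "\<lambda>(c,d). (d,c)"]) auto
    show "(\<lambda>(c,d). F c d * L (a (k-c) (b (l-d) w) i)) \<circ> (\<lambda>(d,c). (c,d)) =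
      (\<lambda>(d,c). EF F $$ d $$ c * DL L a b w i $$ (l-d) $$ (k-c))"
      by (auto simp: fun_eq_iff EF_nth[OF F] DL_nth[OF a b L])
  qed
  also have "\<dots> = (EF F * DL L a b w i)$$l$$k" by (rule fls2_mult_nth[symmetric])
  finally show ?thesis .
qed

end

context ctx
begin

abbreviation fbd :: "int \<Rightarrow> (int \<Rightarrow> int \<Rightarrow> complex) \<Rightarrow> 'v hser \<Rightarrow> 'v hser \<Rightarrow> 'v hmod \<Rightarrow> nat \<Rightarrow> bool" where
  "fbd N F a b w i \<equiv> (\<forall>k l. (k < N \<or> l < N) \<longrightarrow> fab scale F a b k l w i = 0)"

lemma pairok_laurent: "pair_ok scale n a b F \<Longrightarrow> laurent2 F"
  by (simp add: pair_ok_def)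

lemma pairok_nz: "pair_ok scale n a b F \<Longrightarrow> F \<noteq> (\<lambda>c d. 0)"
  by (simp add: pair_ok_def)

lemma pairok_bd: "pair_ok scale n a b F \<Longrightarrow> \<exists>N. \<forall>i<n. fbd N F a b w i"
  unfolding pair_ok_def by blast

lemma pairok_mono: "pair_ok scale n a b F \<Longrightarrow> n' \<le> n \<Longrightarrow> pair_ok scale n' a b F"
  unfolding pair_ok_def by (meson order_less_le_trans)

lemma Rbd_A:
  assumes a: "a \<in> Eh scale" and b: "b \<in> Eh scale" and F: "laurent2 F" and L: "lin L"
    and bd: "fbd N F a b w i"
  shows "Rbd N (EF F * DL L a b w i)"
  unfolding Rbd_def
proof (intro allI impI)
  fix l k assume "l < N \<or> k < N"
  then have "fab scale F a b k l w i = 0" using bd by blast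
  then show "(EF F * DL L a b w i) $$ l $$ k = 0"
    using L_fab[OF a b F L] lin_0[OF L] by metis
qed

lemma sp_Sum_any:
  "subst_phi scale p F a b j t w i = (\<Sum>(k,l). scale (cc k j (t-l)) (fab scale F a b k l w i))"
  unfolding subst_phi_def Sum_any.expand_set
  by (rule sum.cong) (auto simp: case_prod_unfold)

lemma sp_supp:
  assumes bd: "fbd N F a b w i"
  shows "(\<lambda>(k,l). scale (cc k j (t-l)) (fab scale F a b k l w i)) x \<noteq> 0 \<Longrightarrow>
     x \<in> {N..t - int j * ee - N} \<times> {N..t - int j * ee - N}"
proof -
  assume nz: "(\<lambda>(k,l). scale (cc k j (t-l)) (fab scale F a b k l w i)) x \<noteq> 0"
  obtain k l where x: "x = (k,l)" by (cases x)
  from nz have c0: "cc k j (t-l) \<noteq> 0" and f0: "fab scale F a b k l w i \<noteq> 0" by (auto simp: x)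
  have "\<not> k < N" "\<not> l < N" using bd f0 by blast+
  moreover have "k + int j * ee \<le> t - l" using cc_nz[OF c0] .
  ultimately show ?thesis unfolding x by auto
qed

lemma sp_fin:
  assumes bd: "fbd N F a b w i"
  shows "finite {x. (\<lambda>(k,l). scale (cc k j (t-l)) (fab scale F a b k l w i)) x \<noteq> 0}"
  by (rule supp_finI[OF _ sp_supp[OF bd]]) simp

lemma sp_below:
  assumes bd: "fbd N F a b w i" and t: "t < 2*N + int j * ee"
  shows "subst_phi scale p F a b j t w i = 0"
proof -
  have "(\<lambda>(k,l). scale (cc k j (t-l)) (fab scale F a b k l w i)) = (\<lambda>_. 0)"
  proof
    fix x show "(\<lambda>(k,l). scale (cc k j (t-l)) (fab scale F a b k l w i)) x = 0"
      using sp_supp[OF bd, of j t x] t by (cases x) force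
  qed
  then show ?thesis by (simp add: sp_Sum_any)
qed

lemma L_sp:
  assumes a: "a \<in> Eh scale" and b: "b \<in> Eh scale" and F: "laurent2 F" and L: "lin L"
    and bd: "fbd N F a b w i"
  shows "L (subst_phi scale p F a b j t w i) = Sx (EF F * DL L a b w i) $ j $$ t"
proof -
  have "L (subst_phi scale p F a b j t w i) = (\<Sum>(k,l). cc k j (t-l) * L (fab scale F a b k l w i))"
    unfolding sp_Sum_any
    using Sum_any_lin[OF _ L, where c = "\<lambda>(k,l). cc k j (t-l)" and v = "\<lambda>(k,l). fab scale F a b k l w i"]
      sp_fin[OF bd, of j t]
    by (simp add: case_prod_unfold)
  also have "\<dots> = (\<Sum>(k,l). (EF F * DL L a b w i)$$l$$k * cc k j (t-l))"
    by (rule Sum_any.cong) (simp add: case_prod_unfold L_fab[OF a b F L] mult.commute)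
  also have "\<dots> = Sx (EF F * DL L a b w i) $ j $$ t"
    by (rule Sx_nth[OF Rbd_A[OF a b F L bd], symmetric])
  finally show ?thesis .
qed

lemma f_phi_Sx:
  assumes F: "laurent2 F"
  shows "f_phi p F = Sx (EF F)"
proof -
  have "(\<Sum>(c,d)\<in>{(c,d). F c d \<noteq> 0 \<and> cc c j (t - d) \<noteq> 0}. F c d * cc c j (t - d)) =
        (\<Sum>(k,l). EF F $$ l $$ k * cc k j (t-l))" for j t
    unfolding Sum_any.expand_set by (rule sum.cong) (auto simp: case_prod_unfold EF_nth[OF F])
  then show ?thesis unfolding f_phi_def Sx_def by simp
qed

abbreviation IF :: "(int \<Rightarrow> int \<Rightarrow> complex) \<Rightarrow> complex fls fls" where
  "IF F \<equiv> inv_f_phi p F"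

lemma Y_Sum_any:
  "Ycoef scale p F a b m t w i = (\<Sum>(j1,t1). scale (if - m - 1 - j1 \<ge> 0 then IF F $$ j1 $$ t1 else 0)
      (subst_phi scale p F a b (nat (- m - 1 - j1)) (t - t1) w i))"
  unfolding Ycoef_def Sum_any.expand_set
  by (rule sum.cong) (auto simp: case_prod_unfold)

lemma Y_supp:
  assumes bd: "fbd N F a b w i"
  shows "(\<lambda>(j1,t1). scale (if - m - 1 - j1 \<ge> 0 then IF F $$ j1 $$ t1 else 0)
      (subst_phi scale p F a b (nat (- m - 1 - j1)) (t - t1) w i)) x \<noteq> 0 \<Longrightarrow>
    x \<in> (\<Union>j1\<in>{fls_subdegree (IF F)..- m - 1}. {j1} \<times> {fls_subdegree (IF F $$ j1)..t - 2*N - int (nat (- m - 1 - j1)) * ee})"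
proof -
  assume nz: "(\<lambda>(j1,t1). scale (if - m - 1 - j1 \<ge> 0 then IF F $$ j1 $$ t1 else 0)
      (subst_phi scale p F a b (nat (- m - 1 - j1)) (t - t1) w i)) x \<noteq> 0"
  obtain j1 t1 where x: "x = (j1,t1)" by (cases x)
  from nz have c: "- m - 1 - j1 \<ge> 0" and i0: "IF F $$ j1 $$ t1 \<noteq> 0"
    and s0: "subst_phi scale p F a b (nat (- m - 1 - j1)) (t - t1) w i \<noteq> 0"
    by (auto simp: x split: if_splits)
  have "IF F $$ j1 \<noteq> 0" using i0 by auto
  then have "fls_subdegree (IF F) \<le> j1" by (rule fls_subdegree_leI)
  moreover have "fls_subdegree (IF F $$ j1) \<le> t1" using i0 by (rule fls_subdegree_leI)
  moreover have "\<not> t - t1 < 2*N + int (nat (- m - 1 - j1)) * ee" using sp_below[OF bd] s0 by blast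
  ultimately show ?thesis using c unfolding x by auto
qed

lemma Y_fin:
  assumes bd: "fbd N F a b w i"
  shows "finite {x. (\<lambda>(j1,t1). scale (if - m - 1 - j1 \<ge> 0 then IF F $$ j1 $$ t1 else 0)
      (subst_phi scale p F a b (nat (- m - 1 - j1)) (t - t1) w i)) x \<noteq> 0}"
  by (rule supp_finI[OF _ Y_supp[OF bd]]) auto

lemma Y_below:
  "\<exists>T. \<forall>t i w. t < T \<longrightarrow> fbd N F a b w i \<longrightarrow> Ycoef scale p F a b m t w i = 0"
proof -
  define J where "J = {fls_subdegree (IF F)..- m - 1}"
  define T where "T = (if J = {} then 0 else Min ((\<lambda>j1. fls_subdegree (IF F $$ j1) + 2*N + int (nat (- m - 1 - j1)) * ee) ` J))"
  have T: "T \<le> fls_subdegree (IF F $$ j1) + 2*N + int (nat (- m - 1 - j1)) * ee" if "j1 \<in> J" for j1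
    using that by (auto simp: T_def J_def)
  show ?thesis
  proof (intro exI[of _ T] allI impI)
    fix t i w assume t: "t < T" and bd: "fbd N F a b w i"
    have "(\<lambda>(j1,t1). scale (if - m - 1 - j1 \<ge> 0 then IF F $$ j1 $$ t1 else 0)
      (subst_phi scale p F a b (nat (- m - 1 - j1)) (t - t1) w i)) = (\<lambda>_. 0)"
    proof
      fix x
      show "(\<lambda>(j1,t1). scale (if - m - 1 - j1 \<ge> 0 then IF F $$ j1 $$ t1 else 0)
      (subst_phi scale p F a b (nat (- m - 1 - j1)) (t - t1) w i)) x = 0"
      proof (rule ccontr)
        assume "(\<lambda>(j1,t1). scale (if - m - 1 - j1 \<ge> 0 then IF F $$ j1 $$ t1 else 0)
          (subst_phi scale p F a b (nat (- m - 1 - j1)) (t - t1) w i)) x \<noteq> 0"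
        from Y_supp[OF bd this] obtain j1 t1 where x: "x = (j1,t1)" and j1: "j1 \<in> J"
          and t1: "fls_subdegree (IF F $$ j1) \<le> t1" "t1 \<le> t - 2*N - int (nat (- m - 1 - j1)) * ee"
          unfolding J_def by auto
        from T[OF j1] t t1 show False by linarith
      qed
    qed
    then show "Ycoef scale p F a b m t w i = 0" by (simp add: Y_Sum_any)
  qed
qed

lemma L_Y:
  assumes a: "a \<in> Eh scale" and b: "b \<in> Eh scale" and F: "laurent2 F" and L: "lin L"
    and bd: "fbd N F a b w i"
  shows "L (Ycoef scale p F a b m t w i) =
    (inverse (fps_to_fls (Sx (EF F))) * fps_to_fls (Sx (EF F * DL L a b w i))) $$ (- m - 1) $$ t"
proof -
  define A where "A = Sx (EF F * DL L a b w i)"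
  have IFe: "IF F = inverse (fps_to_fls (Sx (EF F)))"
    by (simp add: inv_f_phi_def f_phi_Sx[OF F])
  have "L (Ycoef scale p F a b m t w i) = (\<Sum>(j1,t1). (if - m - 1 - j1 \<ge> 0 then IF F $$ j1 $$ t1 else 0) *
      L (subst_phi scale p F a b (nat (- m - 1 - j1)) (t - t1) w i))"
    unfolding Y_Sum_any
    using Sum_any_lin[OF _ L, where c = "\<lambda>(j1,t1). if - m - 1 - j1 \<ge> 0 then IF F $$ j1 $$ t1 else 0"
        and v = "\<lambda>(j1,t1). subst_phi scale p F a b (nat (- m - 1 - j1)) (t - t1) w i"]
      Y_fin[OF bd, of m t]
    by (simp add: case_prod_unfold)
  also have "\<dots> = (\<Sum>(j1,t1). IF F $$ j1 $$ t1 * fps_to_fls A $$ (- m - 1 - j1) $$ (t - t1))"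
    by (rule Sum_any.cong) (simp add: case_prod_unfold L_sp[OF a b F L bd] A_def)
  also have "\<dots> = (IF F * fps_to_fls A) $$ (- m - 1) $$ t"
    by (rule fls2_mult_nth[symmetric])
  finally show ?thesis by (simp add: IFe A_def)
qed

lemma Y_indep:
  assumes a: "a \<in> Eh scale" and b: "b \<in> Eh scale"
    and pF: "pair_ok scale n a b F" and pG: "pair_ok scale n a b G" and i: "i < n"
  shows "Ycoef scale p F a b m t w i = Ycoef scale p G a b m t w i"
proof (rule eq_by_lin)
  fix L assume L: "lin L"
  have F: "laurent2 F" and G: "laurent2 G" using pF pG by (simp_all add: pair_ok_def)
  obtain NF where bF: "fbd NF F a b w i" using pairok_bd[OF pF, of w] i by blast
  obtain NG where bG: "fbd NG G a b w i" using pairok_bd[OF pG, of w] i by blast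
  obtain MF where MF: "Rbd MF (EF F)" using laurent2_Rbd[OF F] by blast
  obtain MG where MG: "Rbd MG (EF G)" using laurent2_Rbd[OF G] by blast
  define D where "D = DL L a b w i"
  have AF: "Rbd NF (EF F * D)" unfolding D_def by (rule Rbd_A[OF a b F L bF])
  have AG: "Rbd NG (EF G * D)" unfolding D_def by (rule Rbd_A[OF a b G L bG])
  have sF: "Sx (EF F) \<noteq> 0" by (rule Sx_EF_nz[OF F pairok_nz[OF pF]])
  have sG: "Sx (EF G) \<noteq> 0" by (rule Sx_EF_nz[OF G pairok_nz[OF pG]])
  have "Sx (EF G) * Sx (EF F * D) = Sx (EF G * (EF F * D))" by (rule Sx_mult[OF MG AF, symmetric])
  also have "EF G * (EF F * D) = EF F * (EF G * D)" by (simp add: mult_ac)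
  also have "Sx (EF F * (EF G * D)) = Sx (EF F) * Sx (EF G * D)" by (rule Sx_mult[OF MF AG])
  finally have eq: "Sx (EF G) * Sx (EF F * D) = Sx (EF F) * Sx (EF G * D)" .
  define fF where "fF = fps_to_fls (Sx (EF F))"
  define fG where "fG = fps_to_fls (Sx (EF G))"
  define aF where "aF = fps_to_fls (Sx (EF F * D))"
  define aG where "aG = fps_to_fls (Sx (EF G * D))"
  have fF: "fF \<noteq> 0" using sF by (simp add: fF_def)
  have fG: "fG \<noteq> 0" using sG by (simp add: fG_def)
  have eq2: "fG * aF = fF * aG" using arg_cong[OF eq, of fps_to_fls]
    by (simp add: fls_times_fps_to_fls fF_def fG_def aF_def aG_def)
  have "inverse fF * aF = inverse fG * aG"
    using fF fG eq2 by (simp add: field_simps)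
  then show "L (Ycoef scale p F a b m t w i) = L (Ycoef scale p G a b m t w i)"
    unfolding L_Y[OF a b F L bF] L_Y[OF a b G L bG]
    by (simp add: fF_def fG_def aF_def aG_def D_def)
qed

end

context ctx
begin

lemma DL_add:
  assumes a: "a \<in> Eh scale" and b: "b \<in> Eh scale" and L: "lin L"
  shows "DL L a b (hadd v w) i = DL L a b v i + DL L a b w i"
proof (rule fls_eqI, rule fls_eqI)
  fix l' k'
  have "a k' (b l' (hadd v w)) = hadd (a k' (b l' v)) (a k' (b l' w))"
    using hlinear_add[OF Eh_hlinear[OF b]] hlinear_add[OF Eh_hlinear[OF a]] by simp
  then show "DL L a b (hadd v w) i $$ l' $$ k' = (DL L a b v i + DL L a b w i) $$ l' $$ k'"
    by (simp add: DL_nth[OF a b L] hadd_def lin_add[OF L])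
qed

lemma DL_smult:
  assumes a: "a \<in> Eh scale" and b: "b \<in> Eh scale" and L: "lin L"
  shows "DL L a b (hsmult scale c w) i = (\<Sum>j\<le>i. cst (c j) * DL L a b w (i-j))"
proof (rule fls_eqI, rule fls_eqI)
  fix l' k'
  have "a k' (b l' (hsmult scale c w)) = hsmult scale c (a k' (b l' w))"
    using hlinear_smult[OF Eh_hlinear[OF b]] hlinear_smult[OF Eh_hlinear[OF a]] by simp
  then have "DL L a b (hsmult scale c w) i $$ l' $$ k' = (\<Sum>j\<le>i. c j * L (a k' (b l' w) (i-j)))"
    by (simp add: DL_nth[OF a b L] hsmult_def lin_sum[OF L] lin_scale[OF L])
  also have "\<dots> = (\<Sum>j\<le>i. cst (c j) * DL L a b w (i-j)) $$ l' $$ k'"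
    by (simp add: fls_nth_sum DL_nth[OF a b L])
  finally show "DL L a b (hsmult scale c w) i $$ l' $$ k' = (\<Sum>j\<le>i. cst (c j) * DL L a b w (i-j)) $$ l' $$ k'" .
qed

lemma Sx_sum:
  assumes "finite J" "\<And>j. j \<in> J \<Longrightarrow> Rbd N (X j)"
  shows "Sx (\<Sum>j\<in>J. X j) = (\<Sum>j\<in>J. Sx (X j)) \<and> Rbd N (\<Sum>j\<in>J. X j)"
  using assms
proof (induction J rule: finite_induct)
  case empty
  have "Sx 0 = 0"
    by (rule fps_ext, rule fls_eqI) (simp add: Sx_nth[of 0 0] Rbd_def)
  then show ?case by (simp add: Rbd_def)
next
  case (insert x F)
  then have IH: "Sx (\<Sum>j\<in>F. X j) = (\<Sum>j\<in>F. Sx (X j))" "Rbd N (\<Sum>j\<in>F. X j)" by auto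
  have Rx: "Rbd N (X x)" using insert by auto
  show ?case using insert IH Sx_add[OF Rx IH(2)] Rbd_add[OF Rx IH(2)] by simp
qed

lemma fps_to_fls_sum: "fps_to_fls (\<Sum>j\<in>J. f j) = (\<Sum>j\<in>J. fps_to_fls (f j))"
  by (induction J rule: infinite_finite_induct) auto

lemma fps_to_fls_cmult: "fps_to_fls (fps_const c * f) = fls_const c * fps_to_fls (f :: complex fls fps)"
  by (simp only: fls_times_fps_to_fls fps_const_to_fls)

lemma Y_add:
  assumes a: "a \<in> Eh scale" and b: "b \<in> Eh scale" and F: "laurent2 F"
    and bv: "fbd N1 F a b v i" and bw: "fbd N2 F a b w i" and bvw: "fbd N3 F a b (hadd v w) i"
  shows "Ycoef scale p F a b m t (hadd v w) i = Ycoef scale p F a b m t v i + Ycoef scale p F a b m t w i"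
proof (rule eq_by_lin)
  fix L assume L: "lin L"
  define M where "M = min N1 N2"
  have Av: "Rbd M (EF F * DL L a b v i)" using Rbd_A[OF a b F L bv] Rbd_mono by (simp add: M_def)
  have Aw: "Rbd M (EF F * DL L a b w i)" using Rbd_A[OF a b F L bw] Rbd_mono by (simp add: M_def)
  have "Sx (EF F * DL L a b (hadd v w) i) = Sx (EF F * DL L a b v i) + Sx (EF F * DL L a b w i)"
    unfolding DL_add[OF a b L] distrib_left by (rule Sx_add[OF Av Aw])
  then show "L (Ycoef scale p F a b m t (hadd v w) i) = L (Ycoef scale p F a b m t v i + Ycoef scale p F a b m t w i)"
    unfolding lin_add[OF L] L_Y[OF a b F L bv] L_Y[OF a b F L bw] L_Y[OF a b F L bvw]
    by (simp add: distrib_left)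
qed

lemma Y_smult:
  assumes a: "a \<in> Eh scale" and b: "b \<in> Eh scale" and F: "laurent2 F"
    and bw: "\<And>i'. i' \<le> i \<Longrightarrow> fbd N F a b w i'" and bcw: "fbd N' F a b (hsmult scale c w) i"
  shows "Ycoef scale p F a b m t (hsmult scale c w) i = (\<Sum>j\<le>i. scale (c j) (Ycoef scale p F a b m t w (i-j)))"
proof (rule eq_by_lin)
  fix L assume L: "lin L"
  define I where "I = inverse (fps_to_fls (Sx (EF F)))"
  have A: "Rbd N (cst (c j) * (EF F * DL L a b w (i-j)))" if "j \<in> {..i}" for j
    using Rbd_cst[OF Rbd_A[OF a b F L bw]] that by simp
  have "EF F * DL L a b (hsmult scale c w) i = (\<Sum>j\<le>i. cst (c j) * (EF F * DL L a b w (i-j)))"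
    unfolding DL_smult[OF a b L] sum_distrib_left by (simp add: mult_ac)
  then have "Sx (EF F * DL L a b (hsmult scale c w) i) = (\<Sum>j\<le>i. Sx (cst (c j) * (EF F * DL L a b w (i-j))))"
    using conjunct1[OF Sx_sum[where J = "{..i}" and N = N and X = "\<lambda>j. cst (c j) * (EF F * DL L a b w (i-j))", OF finite_atMost A]]
    by simp
  also have "\<dots> = (\<Sum>j\<le>i. fps_const (fls_const (c j)) * Sx (EF F * DL L a b w (i-j)))"
    by (rule sum.cong[OF refl]) (rule Sx_cst[OF Rbd_A[OF a b F L bw]], simp)
  finally have e: "I * fps_to_fls (Sx (EF F * DL L a b (hsmult scale c w) i)) =
     (\<Sum>j\<le>i. cst (c j) * (I * fps_to_fls (Sx (EF F * DL L a b w (i-j)))))"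
    by (simp add: fps_to_fls_sum fps_to_fls_cmult sum_distrib_left cst_def mult_ac)
  have "L (Ycoef scale p F a b m t (hsmult scale c w) i) = (I * fps_to_fls (Sx (EF F * DL L a b (hsmult scale c w) i))) $$ (-m-1) $$ t"
    unfolding L_Y[OF a b F L bcw] I_def ..
  also have "\<dots> = (\<Sum>j\<le>i. c j * (I * fps_to_fls (Sx (EF F * DL L a b w (i-j)))) $$ (-m-1) $$ t)"
    unfolding e by (simp add: fls_nth_sum)
  also have "\<dots> = (\<Sum>j\<le>i. c j * L (Ycoef scale p F a b m t w (i-j)))"
    by (rule sum.cong[OF refl]) (simp add: L_Y[OF a b F L bw] I_def)
  also have "\<dots> = L (\<Sum>j\<le>i. scale (c j) (Ycoef scale p F a b m t w (i-j)))"
    by (simp add: lin_sum[OF L] lin_scale[OF L])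
  finally show "L (Ycoef scale p F a b m t (hsmult scale c w) i) = L (\<Sum>j\<le>i. scale (c j) (Ycoef scale p F a b m t w (i-j)))" .
qed

lemma Yphi_char:
  assumes a: "a \<in> Eh scale" and b: "b \<in> Eh scale"
    and ex: "\<forall>n\<ge>1. \<exists>F. pair_ok scale n a b F"
  shows "Yphi scale p a b m \<in> Eh scale \<and>
    (\<forall>n\<ge>1. \<forall>t w. \<forall>i<n. Yphi scale p a b m t w i = Ycoef scale p (SOME F. pair_ok scale n a b F) a b m t w i)"
proof -
  define Fn where "Fn n = (SOME F. pair_ok scale n a b F)" for n
  have pFn: "pair_ok scale n a b (Fn n)" if "1 \<le> n" for n
  proof -
    have "\<exists>F. pair_ok scale n a b F" using ex that by blast
    then show ?thesis unfolding Fn_def by (rule someI_ex)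
  qed
  define g where "g t w i = Ycoef scale p (Fn (Suc i)) a b m t w i" for t w i
  have gval: "g t w i = Ycoef scale p (Fn n) a b m t w i" if "1 \<le> n" "i < n" for n t w i
    unfolding g_def
    by (rule Y_indep[OF a b pFn pairok_mono[OF pFn[OF that(1)]]]) (use that in auto)
  have Fl: "laurent2 (Fn n)" if "1 \<le> n" for n using pFn[OF that] by (rule pairok_laurent)
  have hl: "hlinear scale (g t)" for t
    unfolding hlinear_def
  proof (intro conjI allI)
    fix v w
    show "g t (hadd v w) = hadd (g t v) (g t w)"
    proof
      fix i
      obtain N1 where "\<forall>i'<Suc i. fbd N1 (Fn (Suc i)) a b v i'" using pairok_bd[OF pFn, of "Suc i" v] by auto
      then have b1: "fbd N1 (Fn (Suc i)) a b v i" by blast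
      obtain N2 where "\<forall>i'<Suc i. fbd N2 (Fn (Suc i)) a b w i'" using pairok_bd[OF pFn, of "Suc i" w] by auto
      then have b2: "fbd N2 (Fn (Suc i)) a b w i" by blast
      obtain N3 where "\<forall>i'<Suc i. fbd N3 (Fn (Suc i)) a b (hadd v w) i'" using pairok_bd[OF pFn, of "Suc i" "hadd v w"] by auto
      then have b3: "fbd N3 (Fn (Suc i)) a b (hadd v w) i" by blast
      show "g t (hadd v w) i = hadd (g t v) (g t w) i"
        unfolding g_def hadd_def[of "\<lambda>i. Ycoef scale p (Fn (Suc i)) a b m t v i"]
        using Y_add[OF a b Fl b1 b2 b3] by (simp add: hadd_def)
    qed
  next
    fix c w
    show "g t (hsmult scale c w) = hsmult scale c (g t w)"
    proof
      fix i
      obtain N where "\<forall>i'<Suc i. fbd N (Fn (Suc i)) a b w i'" using pairok_bd[OF pFn, of "Suc i" w] by auto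
      then have b1: "\<And>i'. i' \<le> i \<Longrightarrow> fbd N (Fn (Suc i)) a b w i'" by auto
      obtain N' where "\<forall>i'<Suc i. fbd N' (Fn (Suc i)) a b (hsmult scale c w) i'"
        using pairok_bd[OF pFn, of "Suc i" "hsmult scale c w"] by auto
      then have b2: "fbd N' (Fn (Suc i)) a b (hsmult scale c w) i" by blast
      have "g t (hsmult scale c w) i = (\<Sum>j\<le>i. scale (c j) (Ycoef scale p (Fn (Suc i)) a b m t w (i-j)))"
        unfolding g_def by (rule Y_smult[OF a b Fl b1 b2]) simp
      also have "\<dots> = (\<Sum>j\<le>i. scale (c j) (g t w (i-j)))"
        by (rule sum.cong[OF refl]) (simp add: gval[of "Suc i"])
      also have "\<dots> = hsmult scale c (g t w) i" by (simp add: hsmult_def)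
      finally show "g t (hsmult scale c w) i = hsmult scale c (g t w) i" .
    qed
  qed
  have tr: "\<exists>N. \<forall>t<N. \<forall>i<n. g t w i = 0" if n1: "1 \<le> n" for n w
  proof -
    obtain N where bN: "\<forall>i<n. fbd N (Fn n) a b w i" using pairok_bd[OF pFn[OF n1], of w] by blast
    obtain T where T: "\<forall>t i w. t < T \<longrightarrow> fbd N (Fn n) a b w i \<longrightarrow> Ycoef scale p (Fn n) a b m t w i = 0"
      using Y_below by blast
    show ?thesis using T bN gval[OF n1] by (intro exI[of _ T]) auto
  qed
  have gEh: "g \<in> Eh scale" unfolding Eh_def using hl tr by auto
  define P where "P g' \<longleftrightarrow> g' \<in> Eh scale \<and>
      (\<forall>n\<ge>1. \<forall>t w. \<forall>i<n. g' t w i = Ycoef scale p (SOME F. pair_ok scale n a b F) a b m t w i)" for g'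
  have Pg: "P g" unfolding P_def using gEh gval by (simp add: Fn_def)
  have uniq: "g' = g" if "P g'" for g'
  proof (intro ext)
    fix t w i
    have "g' t w i = Ycoef scale p (Fn (Suc i)) a b m t w i" using that unfolding P_def Fn_def by auto
    then show "g' t w i = g t w i" by (simp add: g_def)
  qed
  have "Yphi scale p a b m = g"
    unfolding Yphi_def P_def[symmetric] by (rule the_equality[where P = P, OF Pg uniq])
  then show ?thesis using Pg unfolding P_def by simp
qed

lemma Yphi_Eh:
  assumes "a \<in> Eh scale" "b \<in> Eh scale" "\<forall>n\<ge>1. \<exists>F. pair_ok scale n a b F"
  shows "Yphi scale p a b m \<in> Eh scale"
  using Yphi_char[OF assms] by blast

lemma Yphi_val:
  assumes a: "a \<in> Eh scale" and b: "b \<in> Eh scale" and ex: "\<forall>n\<ge>1. \<exists>F. pair_ok scale n a b F"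
    and pF: "pair_ok scale n a b F" and i: "i < n"
  shows "Yphi scale p a b m t w i = Ycoef scale p F a b m t w i"
proof -
  have n: "1 \<le> n" using i by simp
  have pS: "pair_ok scale n a b (SOME F. pair_ok scale n a b F)"
    using someI[where P = "pair_ok scale n a b", OF pF] by simp
  have "Yphi scale p a b m t w i = Ycoef scale p (SOME F. pair_ok scale n a b F) a b m t w i"
    using Yphi_char[OF a b ex] n i by blast
  also have "\<dots> = Ycoef scale p F a b m t w i" by (rule Y_indep[OF a b pS pF i])
  finally show ?thesis .
qed

end

lemma pairprod2: "pairprod 2 F [x, y] = F x y"
proof -
  have l: "[(i,j). i \<leftarrow> [0..<2], j \<leftarrow> [Suc i..<2]] = [(0::nat,1::nat)]"
    by (simp add: numeral_2_eq_2 upt_rec)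
  have S: "{ks. length ks = 2 \<and> pairser 2 0 1 F ks \<noteq> 0 \<and> unitser 2 (map2 (-) [x,y] ks) \<noteq> 0}
        = (if F x y \<noteq> 0 then {[x,y]} else {})"
  proof (intro set_eqI iffI)
    fix ks assume "ks \<in> {ks. length ks = 2 \<and> pairser 2 0 1 F ks \<noteq> 0 \<and> unitser 2 (map2 (-) [x,y] ks) \<noteq> 0}"
    then have len: "length ks = 2" and P: "pairser 2 0 1 F ks \<noteq> 0" and Q: "unitser 2 (map2 (-) [x,y] ks) \<noteq> 0" by auto
    from len obtain c d where ks: "ks = [c,d]" by (auto simp: numeral_2_eq_2 length_Suc_conv)
    from Q have "[x - c, y - d] = [0, 0]" by (simp add: unitser_def ks numeral_2_eq_2 split: if_splits)
    then have "c = x" "d = y" by auto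
    moreover from P have "F c d \<noteq> 0" by (simp add: pairser_def ks split: if_splits)
    ultimately show "ks \<in> (if F x y \<noteq> 0 then {[x,y]} else {})" by (simp add: ks)
  next
    fix ks assume "ks \<in> (if F x y \<noteq> 0 then {[x,y]} else {})"
    then have ks: "ks = [x,y]" and F0: "F x y \<noteq> 0" by (auto split: if_splits)
    have "pairser 2 0 1 F ks = F x y" by (simp add: pairser_def ks numeral_2_eq_2)
    moreover have "unitser 2 (map2 (-) [x,y] ks) = 1" by (simp add: unitser_def ks numeral_2_eq_2)
    ultimately show "ks \<in> {ks. length ks = 2 \<and> pairser 2 0 1 F ks \<noteq> 0 \<and> unitser 2 (map2 (-) [x,y] ks) \<noteq> 0}"
      using F0 ks by simp
  qed
  have "pairprod 2 F [x,y] = conv 2 (pairser 2 0 1 F) (unitser 2) [x,y]"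
    unfolding pairprod_def l by simp
  also have "\<dots> = (if F x y \<noteq> 0 then pairser 2 0 1 F [x,y] * unitser 2 (map2 (-) [x,y] [x,y]) else 0)"
    unfolding conv_def S by simp
  also have "\<dots> = F x y" by (simp add: pairser_def unitser_def numeral_2_eq_2)
  finally show ?thesis .
qed

context ctx
begin

lemma qc_pair_ok:
  assumes "qc_at scale n [a, b]"
  shows "\<exists>F. pair_ok scale n a b F"
proof -
  from assms obtain F where F: "laurent2 F" "F \<noteq> (\<lambda>a b. 0)"
    and H: "\<forall>w. \<exists>N. \<forall>ns. length ns = 2 \<longrightarrow> (\<exists>l<2. ns ! l < N) \<longrightarrow>
          (\<forall>i<n. (\<Sum>ks\<in>{ks. length ks = 2 \<and> pairprod 2 F ks \<noteq> 0 \<and>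
                              opprod [a,b] (map2 (-) ns ks) w i \<noteq> 0}.
                     scale (pairprod 2 F ks) (opprod [a,b] (map2 (-) ns ks) w i)) = 0)"
    unfolding qc_at_def Let_def by (auto simp: numeral_2_eq_2)
  have key: "(\<Sum>ks\<in>{ks. length ks = 2 \<and> pairprod 2 F ks \<noteq> 0 \<and>
                              opprod [a,b] (map2 (-) [k,l] ks) w i \<noteq> 0}.
                     scale (pairprod 2 F ks) (opprod [a,b] (map2 (-) [k,l] ks) w i)) = fab scale F a b k l w i"
    for k l w i
  proof -
    define S where "S = {(c,d). F c d \<noteq> 0 \<and> a (k - c) (b (l - d) w) i \<noteq> 0}"
    have inj: "inj_on (\<lambda>(c,d). [c,d]) S" by (auto simp: inj_on_def)
    have img: "{ks. length ks = 2 \<and> pairprod 2 F ks \<noteq> 0 \<and> opprod [a,b] (map2 (-) [k,l] ks) w i \<noteq> 0}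
        = (\<lambda>(c,d). [c,d]) ` S"
    proof (intro set_eqI iffI)
      fix ks assume "ks \<in> {ks. length ks = 2 \<and> pairprod 2 F ks \<noteq> 0 \<and> opprod [a,b] (map2 (-) [k,l] ks) w i \<noteq> 0}"
      then have len: "length ks = 2" and P: "pairprod 2 F ks \<noteq> 0" and Q: "opprod [a,b] (map2 (-) [k,l] ks) w i \<noteq> 0" by auto
      from len obtain c d where ks: "ks = [c,d]" by (auto simp: numeral_2_eq_2 length_Suc_conv)
      show "ks \<in> (\<lambda>(c,d). [c,d]) ` S" using P Q by (auto simp: ks S_def pairprod2)
    next
      fix ks assume "ks \<in> (\<lambda>(c,d). [c,d]) ` S"
      then obtain c d where ks: "ks = [c,d]" and cd: "(c,d) \<in> S" by auto
      then show "ks \<in> {ks. length ks = 2 \<and> pairprod 2 F ks \<noteq> 0 \<and> opprod [a,b] (map2 (-) [k,l] ks) w i \<noteq> 0}"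
        by (auto simp: ks S_def pairprod2)
    qed
    define f where "f ks = scale (pairprod 2 F ks) (opprod [a,b] (map2 (-) [k,l] ks) w i)" for ks
    have "(\<Sum>ks\<in>{ks. length ks = 2 \<and> pairprod 2 F ks \<noteq> 0 \<and> opprod [a,b] (map2 (-) [k,l] ks) w i \<noteq> 0}. f ks)
        = (\<Sum>ks\<in>(\<lambda>(c,d). [c,d]) ` S. f ks)" by (simp only: img)
    also have "\<dots> = (\<Sum>x\<in>S. f ((\<lambda>(c,d). [c,d]) x))"
      using sum.reindex[OF inj, of f] by (simp add: comp_def)
    also have "\<dots> = fab scale F a b k l w i"
      unfolding fab_def S_def by (rule sum.cong) (auto simp: pairprod2 f_def)
    finally show ?thesis by (simp only: f_def)
  qed
  show ?thesis unfolding pair_ok_def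
  proof (intro exI[of _ F] conjI F allI)
    fix w
    obtain N where N: "\<forall>ns. length ns = 2 \<longrightarrow> (\<exists>l<2. ns ! l < N) \<longrightarrow>
          (\<forall>i<n. (\<Sum>ks\<in>{ks. length ks = 2 \<and> pairprod 2 F ks \<noteq> 0 \<and>
                              opprod [a,b] (map2 (-) ns ks) w i \<noteq> 0}.
                     scale (pairprod 2 F ks) (opprod [a,b] (map2 (-) ns ks) w i)) = 0)"
      using H by blast
    show "\<exists>N. \<forall>k l. (k < N \<or> l < N) \<longrightarrow> (\<forall>i<n. fab scale F a b k l w i = 0)"
    proof (intro exI[of _ N] allI impI)
      fix k l i assume kl: "k < N \<or> l < N" and i: "i < n"
      have "\<exists>l'<2. [k,l] ! l' < N" using kl by (auto intro: exI[of _ 0] exI[of _ 1])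
      then show "fab scale F a b k l w i = 0" using N[rule_format, of "[k,l]"] i key by simp
    qed
  qed
qed

lemma hqc_pair_ok:
  assumes "hqc scale S" "a \<in> S" "b \<in> S"
  shows "\<forall>n\<ge>1. \<exists>F. pair_ok scale n a b F"
  using assms qc_pair_ok unfolding hqc_def by auto

lemma Y_cong:
  assumes "\<forall>k l. fab scale F a b k l w i = fab scale F a' b' k l w' i'"
  shows "Ycoef scale p F a b m t w i = Ycoef scale p F a' b' m t w' i'"
  by (simp only: Ycoef_def subst_phi_def assms)

lemma Y_zero:
  assumes "\<forall>k l. fab scale F a b k l w i = 0"
  shows "Ycoef scale p F a b m t w i = 0"
  by (simp add: Ycoef_def subst_phi_def assms)

lemma fab_scaled:
  assumes a: "a \<in> Eh scale"
  shows "fab scale F (\<lambda>m w. hsh ka (a m w)) (\<lambda>m w. hsh kb (b m w)) k l w i =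
     (if ka + kb \<le> i then fab scale F a b k l w (i - (ka + kb)) else 0)"
proof -
  have e: "(\<lambda>m w. hsh ka (a m w)) x ((\<lambda>m w. hsh kb (b m w)) y w) = hsh (ka+kb) (a x (b y w))" for x y
    using hlinear_hsh[OF Eh_hlinear[OF a]] by (simp add: hsh_hsh)
  show ?thesis unfolding fab_Sum_any e
    by (auto simp: hsh_def)
qed

lemma Yclosed_hsat:
  assumes sub: "hsubmodule scale U" and qc: "hqc scale U" and Yc: "Yclosed scale p U"
  shows "Yclosed scale p (hsat scale U)"
  unfolding Yclosed_def
proof (intro ballI allI)
  fix a b m assume aS: "a \<in> hsat scale U" and bS: "b \<in> hsat scale U"
  have UE: "U \<subseteq> Eh scale" using sub by (simp add: hsubmodule_def)
  have a: "a \<in> Eh scale" and b: "b \<in> Eh scale" using aS bS by (auto simp: hsat_def)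
  obtain ka where kaU: "ssmult scale (hpow ka) a \<in> U" using aS by (auto simp: hsat_def)
  obtain kb where kbU: "ssmult scale (hpow kb) b \<in> U" using bS by (auto simp: hsat_def)
  define a' where "a' = (\<lambda>m w. hsh ka (a m w))"
  define b' where "b' = (\<lambda>m w. hsh kb (b m w))"
  have a'U: "a' \<in> U" and b'U: "b' \<in> U" using kaU kbU by (simp_all add: a'_def b'_def ssmult_hpow)
  have a'E: "a' \<in> Eh scale" and b'E: "b' \<in> Eh scale" using a'U b'U UE by auto
  define K where "K = ka + kb"
  have exab: "\<forall>n\<ge>1. \<exists>F. pair_ok scale n a b F"
    by (rule hqc_pair_ok[OF hqc_hsat[OF sub qc] aS bS])
  have exab': "\<forall>n\<ge>1. \<exists>F. pair_ok scale n a' b' F"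
    by (rule hqc_pair_ok[OF qc a'U b'U])
  have fs: "fab scale F a' b' k l w i = (if K \<le> i then fab scale F a b k l w (i - K) else 0)" for F k l w i
    unfolding a'_def b'_def K_def by (rule fab_scaled[OF a])
  have eq: "Yphi scale p a' b' m = (\<lambda>t w. hsh K (Yphi scale p a b m t w))"
  proof (intro ext)
    fix t w i
    define F' where "F' = (SOME F. pair_ok scale (Suc i) a' b' F)"
    have pF': "pair_ok scale (Suc i) a' b' F'"
    proof -
      have "\<exists>F. pair_ok scale (Suc i) a' b' F" using exab' by auto
      then show ?thesis unfolding F'_def by (rule someI_ex)
    qed
    have v: "Yphi scale p a' b' m t w i = Ycoef scale p F' a' b' m t w i"
      by (rule Yphi_val[OF a'E b'E exab' pF']) simp
    show "Yphi scale p a' b' m t w i = hsh K (Yphi scale p a b m t w) i"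
    proof (cases "K \<le> i")
      case False
      have "Ycoef scale p F' a' b' m t w i = 0" by (rule Y_zero) (use False fs in simp)
      then show ?thesis using v False by (simp add: hsh_def)
    next
      case True
      define i0 where "i0 = i - K"
      have pF: "pair_ok scale (Suc i0) a b F'"
        using pF' unfolding pair_ok_def
      proof (elim conjE, intro conjI allI)
        fix w
        assume "\<forall>w. \<exists>N. \<forall>k l. k < N \<or> l < N \<longrightarrow> (\<forall>i'<Suc i. fab scale F' a' b' k l w i' = 0)"
        then obtain N where N: "\<forall>k l. k < N \<or> l < N \<longrightarrow> (\<forall>i'<Suc i. fab scale F' a' b' k l w i' = 0)" by blast
        show "\<exists>N. \<forall>k l. k < N \<or> l < N \<longrightarrow> (\<forall>i'<Suc i0. fab scale F' a b k l w i' = 0)"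
        proof (intro exI[of _ N] allI impI)
          fix k l i' assume kl: "k < N \<or> l < N" and i': "i' < Suc i0"
          have "fab scale F' a' b' k l w (i' + K) = 0" using N kl i' True unfolding i0_def by auto
          then show "fab scale F' a b k l w i' = 0" using fs[of F' k l w "i' + K"] by simp
        qed
      qed
      have "Ycoef scale p F' a' b' m t w i = Ycoef scale p F' a b m t w i0"
        by (rule Y_cong) (use True fs in \<open>simp add: i0_def\<close>)
      also have "\<dots> = Yphi scale p a b m t w i0"
        by (rule Yphi_val[OF a b exab pF, symmetric]) simp
      finally show ?thesis using v True by (simp add: hsh_def i0_def)
    qed
  qed
  have "Yphi scale p a' b' m \<in> U" using Yc a'U b'U by (simp add: Yclosed_def)
  then have "ssmult scale (hpow K) (Yphi scale p a b m) \<in> U" by (simp add: eq ssmult_hpow)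
  moreover have "Yphi scale p a b m \<in> Eh scale" by (rule Yphi_Eh[OF a b exab])
  ultimately show "Yphi scale p a b m \<in> hsat scale U" by (auto simp: hsat_def)
qed

end

context ctx
begin

lemma hsh_inj: "hsh n x = hsh n y \<Longrightarrow> x = y"
proof
  fix j assume "hsh n x = hsh n y"
  then have "hsh n x (j + n) = hsh n y (j + n)" by simp
  then show "x j = y j" by simp
qed

lemma hsmult_diff: "hsmult scale c (\<lambda>s. x s - y s) = (\<lambda>s. hsmult scale c x s - hsmult scale c y s)"
  by (auto simp: hsmult_def fun_eq_iff scale_right_diff_distrib sum_subtractf)

lemma Yclosed_hclosure:
  assumes sub: "hsubmodule scale U" and qc: "hqc scale U" and Yc: "Yclosed scale p U"
  shows "Yclosed scale p (hclosure scale U)"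
  unfolding Yclosed_def
proof (intro ballI allI)
  fix a b m assume aS: "a \<in> hclosure scale U" and bS: "b \<in> hclosure scale U"
  have UE: "U \<subseteq> Eh scale" using sub by (simp add: hsubmodule_def)
  have z: "szero \<in> U" using sub by (simp add: hsubmodule_def)
  have a: "a \<in> Eh scale" and b: "b \<in> Eh scale" using aS bS by (auto simp: hclosure_def)
  have exab: "\<forall>n\<ge>1. \<exists>F. pair_ok scale n a b F"
    by (rule hqc_pair_ok[OF hqc_hclosure[OF sub qc] aS bS])
  define g where "g = Yphi scale p a b m"
  have gE: "g \<in> Eh scale" unfolding g_def by (rule Yphi_Eh[OF a b exab])
  have "\<exists>u\<in>U. \<exists>e\<in>Eh scale. g = sadd u (ssmult scale (hpow n) e)" for n
  proof (cases "n = 0")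
    case True
    have "g = sadd szero (ssmult scale (hpow 0) g)"
      by (simp add: sadd_def ssmult_hpow szero_def hadd_def)
    then show ?thesis using True z gE by blast
  next
    case False
    then have n1: "1 \<le> n" by simp
    obtain u e1 where uU: "u \<in> U" and e1: "e1 \<in> Eh scale" and au: "a = sadd u (ssmult scale (hpow n) e1)"
      using aS unfolding hclosure_def by blast
    obtain v e2 where vU: "v \<in> U" and e2: "e2 \<in> Eh scale" and bv: "b = sadd v (ssmult scale (hpow n) e2)"
      using bS unfolding hclosure_def by blast
    have u: "u \<in> Eh scale" and v: "v \<in> Eh scale" using uU vU UE by auto
    have exuv: "\<forall>n\<ge>1. \<exists>F. pair_ok scale n u v F" by (rule hqc_pair_ok[OF qc uU vU])
    define gu where "gu = Yphi scale p u v m"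
    have guU: "gu \<in> U" using Yc uU vU unfolding gu_def Yclosed_def by blast
    have guE: "gu \<in> Eh scale" using guU UE by auto
    have agb: "b y w i = v y w i" if "i < n" for y w i
      using that by (simp add: bv sadd_def ssmult_hpow hadd_def hsh_def)
    have aga: "a x z i = u x z i" if "i < n" for x z i
      using that by (simp add: au sadd_def ssmult_hpow hadd_def hsh_def)
    have agr: "a x (b y w) i = u x (v y w) i" if i: "i < n" for x y w i
    proof -
      have "a x (b y w) i = a x (v y w) i"
        by (rule hlinear_comp[OF Eh_hlinear[OF a]]) (use agb i in auto)
      also have "\<dots> = u x (v y w) i" using aga i by simp
      finally show ?thesis .
    qed
    have fabeq: "fab scale F a b k l w i = fab scale F u v k l w i" if "i < n" for F k l w i
      unfolding fab_def using agr[OF that] by simp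
    have agree: "g t w i = gu t w i" if i: "i < n" for t w i
    proof -
      define F where "F = (SOME F. pair_ok scale n a b F)"
      have pF: "pair_ok scale n a b F"
      proof -
        have "\<exists>F. pair_ok scale n a b F" using exab n1 by auto
        then show ?thesis unfolding F_def by (rule someI_ex)
      qed
      have pF': "pair_ok scale n u v F" using pF fabeq unfolding pair_ok_def by simp
      have "g t w i = Ycoef scale p F a b m t w i" unfolding g_def by (rule Yphi_val[OF a b exab pF i])
      also have "\<dots> = Ycoef scale p F u v m t w i" by (rule Y_cong) (use fabeq[OF i] in simp)
      also have "\<dots> = gu t w i" unfolding gu_def by (rule Yphi_val[OF u v exuv pF' i, symmetric])
      finally show ?thesis .
    qed
    define e where "e t w j = g t w (j + n) - gu t w (j + n)" for t w j
    define D where "D t w = (\<lambda>s. g t w s - gu t w s)" for t w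
    have De: "D t w = hsh n (e t w)" for t w
      using agree by (auto simp: D_def e_def hsh_def fun_eq_iff)
    have ge: "g = sadd gu (ssmult scale (hpow n) e)"
    proof (intro ext)
      fix t w j
      show "g t w j = sadd gu (ssmult scale (hpow n) e) t w j"
        using agree[of j t w] by (cases "n \<le> j") (auto simp: sadd_def ssmult_hpow hadd_def hsh_def e_def)
    qed
    have hlg: "hlinear scale (g t)" "hlinear scale (gu t)" for t using gE guE Eh_hlinear by auto
    have eE: "e \<in> Eh scale"
    proof -
      have "hlinear scale (e t)" for t
        unfolding hlinear_def
      proof (intro conjI allI)
        fix x y
        show "e t (hadd x y) = hadd (e t x) (e t y)"
          using hlinear_add[OF hlg(1)] hlinear_add[OF hlg(2)]
          by (auto simp: e_def hadd_def fun_eq_iff)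
      next
        fix c y
        have "D t (hsmult scale c y) = hsmult scale c (D t y)"
          unfolding D_def using hlinear_smult[OF hlg(1)] hlinear_smult[OF hlg(2)]
          by (simp add: hsmult_diff)
        then have "hsh n (e t (hsmult scale c y)) = hsh n (hsmult scale c (e t y))"
          by (simp add: De hsh_hsmult)
        then show "e t (hsmult scale c y) = hsmult scale c (e t y)" by (rule hsh_inj)
      qed
      moreover have "\<exists>N. \<forall>t<N. \<forall>j<n'. e t w j = 0" if "1 \<le> n'" for n' w
      proof -
        obtain N1 where N1: "\<forall>t<N1. \<forall>i<n' + n. g t w i = 0" using Eh_trunc[OF gE] by blast
        obtain N2 where N2: "\<forall>t<N2. \<forall>i<n' + n. gu t w i = 0" using Eh_trunc[OF guE] by blast
        show ?thesis using N1 N2 by (intro exI[of _ "min N1 N2"]) (auto simp: e_def)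
      qed
      ultimately show ?thesis by (auto simp: Eh_def)
    qed
    show ?thesis using guU eE ge by blast
  qed
  then show "Yphi scale p a b m \<in> hclosure scale U"
    using gE unfolding g_def hclosure_def by blast
qed

end

theorem lemma3p30:
  fixes sc :: "complex \<Rightarrow> 'v::ab_group_add \<Rightarrow> 'v"
    and p :: "complex fls"
    and U :: "'v hser set"
  assumes "vector_space sc"
    and "p \<noteq> 0"
    and "hsubmodule sc U"
    and "hqc sc U"
    and "Yclosed sc p U"
  shows "hqc sc (hsat sc U) \<and> Yclosed sc p (hsat sc U) \<and>
         hqc sc (hclosure sc U) \<and> Yclosed sc p (hclosure sc U)"
proof -
  interpret c: ctx sc p
    unfolding ctx_def cvs_def phictx_def using assms(1,2) by auto
  show ?thesis
    using c.hqc_hsat[OF assms(3,4)] c.Yclosed_hsat[OF assms(3,4,5)]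
      c.hqc_hclosure[OF assms(3,4)] c.Yclosed_hclosure[OF assms(3,4,5)] by blast
qed

end
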